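(* Let $\mathcal{G}$ be an $A$-compatible P-graph with associated map $\mu$ satisfying condition ( * ): for every $\ell'\in\{1,\dots,m\}$ and $i\in\{1,\dots,d\}$, every directed path from $j_i$ to $\ell'$ that contains an edge in $\mathcal{E}^-$ goes through $m+1$. Let $k\in\{1,\dots,d+1\}$, $\widetilde B\in\mathcal{B}^k$, $\ell\in\{1,\dots,m+1\}\setminus\widetilde B$, $B=\widetilde B\cup\{\ell\}$. For $\zeta\in\Theta_\mathcal{G}(F,B)$ define \[\mathcal{E}^F_\zeta=\{E\subseteq\zeta\cap\operatorname{im}\mu : (\zeta\setminus E)\cup\mu^*(E)\in\Theta_\mathcal{G}(F,B)\}.\] Then $\mathcal{E}^F_\zeta$ is closed under union: if $E_1,E_2\in\mathcal{E}^F_\zeta$ then $E_1\cup E_2\in\mathcal{E}^F_\zeta$.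
   Context: $R$ is a partially ordered commutative ring. Let $d\ge0$, $m_0,\dots,m_d\ge0$ with $m=m_0+\cdots+m_d$. $A\in R^{m\times m}$, $b\in R^m$: for $i=1,\dots,d$ the rows indexed by $\mathcal{N}_i=\{1+\sum_{j<i}m_j,\dots,\sum_{j\le i}m_j\}$ are zero outside the columns indexed by $\mathcal{N}_i$, where they form a square $A_i$, and the corresponding subvector $b^i$ has at most one nonzero entry; the last $m_0$ rows form an arbitrary $A_0\in R^{m_0\times m}$ with arbitrary $b^0$. $\mathcal{N}=\{1,\dots,m+1\}$, $\mathcal{N}_0=\{m-m_0+1,\dots,m+1\}$, $\mathcal{N}_{d+1}=\{m+1\}$. Fixed $j_i\in\mathcal{N}_i$ with $b_j=0$ for all $j\le m-m_0$, $j\notin\{j_1,\dots,j_d\}$; $F=\{j_1,\dots,j_d,m+1\}$. $\mathcal{B}^k=\{\{w_j:j\in\{1,\dots,d+1\}\setminus\{k\}\}: w_j\in\mathcal{N}_j\}$. A multidigraph $\mathcal{G}=(\mathcal{N},\mathcal{E})$ has source/target maps $s,t$, no self-loops, labeling $\pi\colon\mathcal{E}\to R$, Laplacian $L_{ij}=\sum_{e:s(e)=j,t(e)=i}\pi(e)$ ($i\ne j$), $L_{ii}=-\sum_{k\ne i}L_{ki}$. $\mathcal{G}$ is $A$-compatible if (i) no edge goes from a node in $\mathcal{N}_i$ ($i\ge0$) to a node in $\mathcal{N}_j$ with $i\ne j$, $j\ge1$; (ii) for $\ell\notin F$ the $\ell$-th row of $L$ equals the $\ell$-th row of $(A\,|\,b)$.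 Trees/forests: subgraphs with acyclic underlying undirected graph (connected for trees), rooted at $N$ if $N$ is the only node without outgoing edges; spanning means node set $\mathcal{N}$; forests are identified with edge sets. $\Theta_\mathcal{G}(F,B)$ ($|F|=|B|$): spanning forests with $|B|$ components, each containing a node of $F$ and being a tree rooted at a node of $B$. A cycle is a closed directed path with no repeated nodes. $\mathcal{E}^-=\{e:\pi(e)\in R_{<0}\}$, $\mathcal{E}^+=\{e:\pi(e)\in R_{>0}\}$. $\mathcal{G}$ is a P-graph with associated map $\mu\colon\mathcal{E}^-\to\mathcal{P}(\mathcal{E}^+)$ if (i) $\mathcal{E}=\mathcal{E}^+\sqcup\mathcal{E}^-$; (ii) every cycle contains at most one edge of $\mathcal{E}^-$; (iii) for $e\in\mathcal{E}^-$: (a) $e'\in\mu(e)\Rightarrow s(e')=s(e)$; (b) $e'\in\mu(e)\Rightarrow$ every cycle containing $e'$ contains $t(e)$; (c) $\mu(e)\cap\mu(e')=\emptyset$ for $e\ne e'$; (iv) $\pi(e)+\sum_{e'\in\mu(e)}\pi(e')\in R_{\ge0}$ for all $e\in\mathcal{E}^-$. $\operatorname{im}\mu=\bigcup_e\mu(e)$, and $\mu^*\colon\operatorname{im}\mu\to\mathcal{E}^-$, $\mu^*(e')=e$ if $e'\in\mu(e)$. *)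

theory Defs
  imports Main
begin

text \<open>Nodes are the natural numbers 1..m+1.  The block sizes are m_0,...,m_d,
  given as a function mm; m = m_0 + ... + m_d.  The blocks N_1,...,N_d come
  first (in this order), the last m_0 indices 1..m belong to A_0.\<close>

definition msum :: "(nat \<Rightarrow> nat) \<Rightarrow> nat \<Rightarrow> nat" where
  "msum mm d = (\<Sum>j\<in>{0..d}. mm j)"

definition Nblk :: "(nat \<Rightarrow> nat) \<Rightarrow> nat \<Rightarrow> nat \<Rightarrow> nat set" where
  "Nblk mm d i =
     (if i = 0 then {msum mm d - mm 0 + 1 .. msum mm d + 1}
      else if i = d + 1 then {msum mm d + 1}
      else {1 + (\<Sum>j\<in>{1..<i}. mm j) .. (\<Sum>j\<in>{1..i}. mm j)})"

definition Bk :: "(nat \<Rightarrow> nat) \<Rightarrow> nat \<Rightarrow> nat \<Rightarrow> nat set set" where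
  "Bk mm d k = {w ` ({1..d+1} - {k}) | w. \<forall>j\<in>{1..d+1} - {k}. w j \<in> Nblk mm d j}"

definition lap :: "'e set \<Rightarrow> ('e \<Rightarrow> nat) \<Rightarrow> ('e \<Rightarrow> nat) \<Rightarrow> ('e \<Rightarrow> 'a::comm_ring) \<Rightarrow> nat
                   \<Rightarrow> nat \<Rightarrow> nat \<Rightarrow> 'a" where
  "lap E s t \<pi> n i j =
     (if i \<noteq> j then (\<Sum>e\<in>{e\<in>E. s e = j \<and> t e = i}. \<pi> e)
      else - (\<Sum>k\<in>{1..n} - {i}. (\<Sum>e\<in>{e\<in>E. s e = i \<and> t e = k}. \<pi> e)))"

text \<open>Undirected cycle in an edge set Z (length >= 2 is automatic without self-loops;
  two parallel or antiparallel edges form an undirected cycle).\<close>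
definition ucycle :: "('e \<Rightarrow> nat) \<Rightarrow> ('e \<Rightarrow> nat) \<Rightarrow> 'e set \<Rightarrow> 'e list \<Rightarrow> nat list \<Rightarrow> bool" where
  "ucycle s t Z es vs \<longleftrightarrow> es \<noteq> [] \<and> length vs = length es \<and> distinct es \<and> distinct vs
     \<and> set es \<subseteq> Z
     \<and> (\<forall>i<length es. {s (es!i), t (es!i)} = {vs!i, vs!((i+1) mod length es)})"

definition uacyclic :: "('e \<Rightarrow> nat) \<Rightarrow> ('e \<Rightarrow> nat) \<Rightarrow> 'e set \<Rightarrow> bool" where
  "uacyclic s t Z \<longleftrightarrow> \<not> (\<exists>es vs. ucycle s t Z es vs)"

definition uadj :: "('e \<Rightarrow> nat) \<Rightarrow> ('e \<Rightarrow> nat) \<Rightarrow> 'e set \<Rightarrow> (nat \<times> nat) set" where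
  "uadj s t Z = {(s e, t e) | e. e \<in> Z} \<union> {(t e, s e) | e. e \<in> Z}"

definition comps :: "nat set \<Rightarrow> ('e \<Rightarrow> nat) \<Rightarrow> ('e \<Rightarrow> nat) \<Rightarrow> 'e set \<Rightarrow> nat set set" where
  "comps V s t Z = {{y\<in>V. (x, y) \<in> (uadj s t Z)\<^sup>*} | x. x \<in> V}"

text \<open>\<Theta>_G(F,B): spanning forests (edge sets Z \<subseteq> E on the full node set V) with |B|
  components, each containing a node of F and being a tree rooted at a node of B
  (the root being the only node of the component without outgoing edges).\<close>
definition Theta :: "nat set \<Rightarrow> 'e set \<Rightarrow> ('e \<Rightarrow> nat) \<Rightarrow> ('e \<Rightarrow> nat) \<Rightarrow> nat set \<Rightarrow> nat set
                     \<Rightarrow> 'e set set" where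
  "Theta V E s t F B = {Z. Z \<subseteq> E \<and> uacyclic s t Z \<and> card (comps V s t Z) = card B
     \<and> (\<forall>C\<in>comps V s t Z. C \<inter> F \<noteq> {}
          \<and> (\<exists>r\<in>B \<inter> C. {v\<in>C. \<not> (\<exists>e\<in>Z. s e = v)} = {r}))}"

definition dcycle :: "('e \<Rightarrow> nat) \<Rightarrow> ('e \<Rightarrow> nat) \<Rightarrow> 'e set \<Rightarrow> 'e list \<Rightarrow> bool" where
  "dcycle s t E es \<longleftrightarrow> es \<noteq> [] \<and> set es \<subseteq> E
     \<and> (\<forall>i<length es. t (es!i) = s (es!((i+1) mod length es)))
     \<and> distinct (map s es)"

definition dpath :: "('e \<Rightarrow> nat) \<Rightarrow> ('e \<Rightarrow> nat) \<Rightarrow> 'e set \<Rightarrow> nat \<Rightarrow> nat \<Rightarrow> 'e list \<Rightarrow> bool" where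
  "dpath s t E u v es \<longleftrightarrow> set es \<subseteq> E
     \<and> (\<forall>i. i + 1 < length es \<longrightarrow> t (es!i) = s (es!(i+1)))
     \<and> (if es = [] then u = v else s (hd es) = u \<and> t (last es) = v)
     \<and> distinct (u # map t es)"

definition Eneg :: "'e set \<Rightarrow> ('e \<Rightarrow> 'a::ordered_comm_ring) \<Rightarrow> 'e set" where
  "Eneg E \<pi> = {e\<in>E. \<pi> e < 0}"

definition Epos :: "'e set \<Rightarrow> ('e \<Rightarrow> 'a::ordered_comm_ring) \<Rightarrow> 'e set" where
  "Epos E \<pi> = {e\<in>E. \<pi> e > 0}"

definition P_graph :: "'e set \<Rightarrow> ('e \<Rightarrow> nat) \<Rightarrow> ('e \<Rightarrow> nat) \<Rightarrow> ('e \<Rightarrow> 'a::ordered_comm_ring)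
                       \<Rightarrow> ('e \<Rightarrow> 'e set) \<Rightarrow> bool" where
  "P_graph E s t \<pi> \<mu> \<longleftrightarrow>
     E = Epos E \<pi> \<union> Eneg E \<pi>
     \<and> (\<forall>es. dcycle s t E es \<longrightarrow> card {i. i < length es \<and> es!i \<in> Eneg E \<pi>} \<le> 1)
     \<and> (\<forall>e\<in>Eneg E \<pi>. \<mu> e \<subseteq> Epos E \<pi>
          \<and> (\<forall>e'\<in>\<mu> e. s e' = s e)
          \<and> (\<forall>e'\<in>\<mu> e. \<forall>es. dcycle s t E es \<and> e' \<in> set es \<longrightarrow> t e \<in> set (map s es))
          \<and> (\<forall>e2\<in>Eneg E \<pi>. e2 \<noteq> e \<longrightarrow> \<mu> e \<inter> \<mu> e2 = {})
          \<and> \<pi> e + (\<Sum>e'\<in>\<mu> e. \<pi> e') \<ge> 0)"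

definition im_mu :: "'e set \<Rightarrow> ('e \<Rightarrow> 'a::ordered_comm_ring) \<Rightarrow> ('e \<Rightarrow> 'e set) \<Rightarrow> 'e set" where
  "im_mu E \<pi> \<mu> = (\<Union>e\<in>Eneg E \<pi>. \<mu> e)"

definition mu_star :: "'e set \<Rightarrow> ('e \<Rightarrow> 'a::ordered_comm_ring) \<Rightarrow> ('e \<Rightarrow> 'e set) \<Rightarrow> 'e \<Rightarrow> 'e" where
  "mu_star E \<pi> \<mu> e' = (THE e. e \<in> Eneg E \<pi> \<and> e' \<in> \<mu> e)"

text \<open>A :: rows/columns 1..m, b :: entries 1..m.  Row l of (A | b) at column c \<le> m is A l c,
  at column m+1 it is b l.\<close>
definition block_structure ::
  "(nat \<Rightarrow> nat) \<Rightarrow> nat \<Rightarrow> (nat \<Rightarrow> nat \<Rightarrow> 'a::comm_ring) \<Rightarrow> (nat \<Rightarrow> 'a) \<Rightarrow> (nat \<Rightarrow> nat) \<Rightarrow> bool" where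
  "block_structure mm d A b jj \<longleftrightarrow>
     (\<forall>i\<in>{1..d}. \<forall>l\<in>Nblk mm d i. \<forall>c\<in>{1..msum mm d} - Nblk mm d i. A l c = 0)
     \<and> (\<forall>i\<in>{1..d}. card {j\<in>Nblk mm d i. b j \<noteq> 0} \<le> 1)
     \<and> (\<forall>i\<in>{1..d}. jj i \<in> Nblk mm d i)
     \<and> (\<forall>j\<in>{1..msum mm d - mm 0} - jj ` {1..d}. b j = 0)"

definition Fset :: "(nat \<Rightarrow> nat) \<Rightarrow> nat \<Rightarrow> (nat \<Rightarrow> nat) \<Rightarrow> nat set" where
  "Fset mm d jj = jj ` {1..d} \<union> {msum mm d + 1}"

definition multidigraph :: "nat \<Rightarrow> 'e set \<Rightarrow> ('e \<Rightarrow> nat) \<Rightarrow> ('e \<Rightarrow> nat) \<Rightarrow> bool" where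
  "multidigraph n E s t \<longleftrightarrow> finite E
     \<and> (\<forall>e\<in>E. s e \<in> {1..n} \<and> t e \<in> {1..n} \<and> s e \<noteq> t e)"

definition A_compatible ::
  "(nat \<Rightarrow> nat) \<Rightarrow> nat \<Rightarrow> (nat \<Rightarrow> nat \<Rightarrow> 'a::comm_ring) \<Rightarrow> (nat \<Rightarrow> 'a) \<Rightarrow> (nat \<Rightarrow> nat)
    \<Rightarrow> 'e set \<Rightarrow> ('e \<Rightarrow> nat) \<Rightarrow> ('e \<Rightarrow> nat) \<Rightarrow> ('e \<Rightarrow> 'a) \<Rightarrow> bool" where
  "A_compatible mm d A b jj E s t \<pi> \<longleftrightarrow>
     (\<forall>e\<in>E. \<forall>i\<in>{0..d}. \<forall>j\<in>{1..d}. i \<noteq> j \<longrightarrow>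
        \<not> (s e \<in> Nblk mm d i \<and> t e \<in> Nblk mm d j))
     \<and> (\<forall>l\<in>{1..msum mm d + 1} - Fset mm d jj.
          (\<forall>c\<in>{1..msum mm d}. lap E s t \<pi> (msum mm d + 1) l c = A l c)
          \<and> lap E s t \<pi> (msum mm d + 1) l (msum mm d + 1) = b l)"

end

theory Submission
  imports Defs
begin

definition sinkf :: "('e \<Rightarrow> nat) \<Rightarrow> 'e set \<Rightarrow> nat \<Rightarrow> bool" where
  "sinkf s Z v \<longleftrightarrow> \<not> (\<exists>e\<in>Z. s e = v)"
definition oef :: "('e \<Rightarrow> nat) \<Rightarrow> 'e set \<Rightarrow> nat \<Rightarrow> 'e" where
  "oef s Z v = (THE e. e \<in> Z \<and> s e = v)"
definition gf :: "('e \<Rightarrow> nat) \<Rightarrow> ('e \<Rightarrow> nat) \<Rightarrow> 'e set \<Rightarrow> nat \<Rightarrow> nat" where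
  "gf s t Z v = (if sinkf s Z v then v else t (oef s Z v))"
definition hf :: "('e \<Rightarrow> nat) \<Rightarrow> ('e \<Rightarrow> nat) \<Rightarrow> 'e set \<Rightarrow> nat \<Rightarrow> nat" where
  "hf s t Z v = (LEAST n. sinkf s Z ((gf s t Z ^^ n) v))"
definition rootf :: "('e \<Rightarrow> nat) \<Rightarrow> ('e \<Rightarrow> nat) \<Rightarrow> 'e set \<Rightarrow> nat \<Rightarrow> nat" where
  "rootf s t Z v = (gf s t Z ^^ hf s t Z v) v"

lemma dcycle_ucycle:
  assumes "dcycle s t Z es" shows "ucycle s t Z es (map s es)"
proof -
  from assms have ne: "es \<noteq> []" and sub: "set es \<subseteq> Z"
    and nx: "\<forall>i<length es. t (es!i) = s (es!((i+1) mod length es))"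
    and ds: "distinct (map s es)" unfolding dcycle_def by auto
  have "distinct es" using ds by (simp add: distinct_map)
  moreover have "\<forall>i<length es. {s (es!i), t (es!i)} = {map s es ! i, map s es ! ((i+1) mod length es)}"
  proof (intro allI impI)
    fix i assume i: "i < length es"
    have "(i+1) mod length es < length es" using ne by simp
    then show "{s (es!i), t (es!i)} = {map s es ! i, map s es ! ((i+1) mod length es)}"
      using nx i by simp
  qed
  ultimately show ?thesis using ne sub ds unfolding ucycle_def by auto
qed

lemma ucycle_mono: "ucycle s t Z es vs \<Longrightarrow> Z \<subseteq> Z' \<Longrightarrow> ucycle s t Z' es vs"
  unfolding ucycle_def by auto

lemma sinkfree_dcycle:
  assumes fin: "finite D" and ne: "D \<noteq> {}"
    and cl: "\<forall>u\<in>D. \<exists>e\<in>Z. s e = u \<and> t e \<in> D"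
  shows "\<exists>es. dcycle s t Z es"
proof -
  define f where "f u = (SOME e. e \<in> Z \<and> s e = u \<and> t e \<in> D)" for u
  have f: "f u \<in> Z \<and> s (f u) = u \<and> t (f u) \<in> D" if "u \<in> D" for u
  proof -
    from cl that have "\<exists>e. e \<in> Z \<and> s e = u \<and> t e \<in> D" by blast
    then show ?thesis unfolding f_def by (rule someI_ex)
  qed
  define gg where "gg u = t (f u)" for u
  obtain x0 where x0: "x0 \<in> D" using ne by auto
  define q where "q n = (gg ^^ n) x0" for n
  have qS: "q (Suc n) = gg (q n)" for n by (simp add: q_def)
  have qD: "q n \<in> D" for n
    by (induction n) (auto simp: qS gg_def f x0 q_def[of 0])
  have "\<not> inj_on q {..card D}"
  proof
    assume "inj_on q {..card D}"
    then have "card (q ` {..card D}) = Suc (card D)" by (simp add: card_image)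
    moreover have "card (q ` {..card D}) \<le> card D"
      using qD fin by (intro card_mono) auto
    ultimately show False by simp
  qed
  then obtain a b where ab: "a \<noteq> b" "q a = q b" unfolding inj_on_def by blast
  have ex: "\<exists>j. \<exists>i<j. q i = q j"
  proof (cases "a < b")
    case True then show ?thesis using ab by blast
  next
    case False then have "b < a" using ab by simp
    then show ?thesis using ab by metis
  qed
  define j0 where "j0 = (LEAST j. \<exists>i<j. q i = q j)"
  have "\<exists>i<j0. q i = q j0" unfolding j0_def using ex by (rule LeastI_ex)
  then obtain i0 where i0: "i0 < j0" "q i0 = q j0" by blast
  have minim: "q a \<noteq> q b" if "a < b" "b < j0" for a b
  proof
    assume "q a = q b"
    then have "\<exists>i<b. q i = q b" using that by blast
    then have "j0 \<le> b" unfolding j0_def by (rule Least_le)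
    then show False using that by simp
  qed
  define es where "es = map (\<lambda>p. f (q p)) [i0..<j0]"
  have les: "length es = j0 - i0" by (simp add: es_def)
  have esn: "es ! p = f (q (i0 + p))" if "p < j0 - i0" for p
    using that by (simp add: es_def)
  have "dcycle s t Z es"
    unfolding dcycle_def
  proof (intro conjI allI impI)
    show "es \<noteq> []" using i0 by (simp add: es_def)
    show "set es \<subseteq> Z" using f qD by (auto simp: es_def)
  next
    fix p assume p: "p < length es"
    have "t (es ! p) = q (Suc (i0 + p))" using p les esn qD f by (simp add: qS gg_def)
    moreover have "s (es ! ((p + 1) mod length es)) = q (Suc (i0 + p))"
    proof (cases "p + 1 < length es")
      case True
      then show ?thesis using les esn f qD by simp
    next
      case False
      then have "p + 1 = length es" using p by simp
      then have "(p + 1) mod length es = 0" by simp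
      moreover have "Suc (i0 + p) = j0" using \<open>p + 1 = length es\<close> les i0 by simp
      ultimately show ?thesis using les esn[of 0] f qD i0 by simp
    qed
    ultimately show "t (es ! p) = s (es ! ((p + 1) mod length es))" by simp
  next
    have "map s es = map q [i0..<j0]" using f qD by (simp add: es_def)
    moreover have "inj_on q {i0..<j0}"
    proof (rule inj_onI)
      fix a b assume "a \<in> {i0..<j0}" "b \<in> {i0..<j0}" "q a = q b"
      then show "a = b" using minim by (metis atLeastLessThan_iff linorder_neq_iff)
    qed
    ultimately show "distinct (map s es)" by (simp add: distinct_map)
  qed
  then show ?thesis by blast
qed

definition spath :: "('e \<Rightarrow> nat) \<Rightarrow> ('e \<Rightarrow> nat) \<Rightarrow> 'e set \<Rightarrow> nat \<Rightarrow> nat \<Rightarrow> 'e list \<Rightarrow> nat list \<Rightarrow> bool" where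
 "spath s t Z x y es vs \<longleftrightarrow> length vs = Suc (length es) \<and> vs!0 = x \<and> vs!(length es) = y
   \<and> set es \<subseteq> Z \<and> distinct vs \<and> (\<forall>i<length es. {s (es!i), t (es!i)} = {vs!i, vs!(Suc i)})"

lemma uadj_sym: "sym (uadj s t Z)"
  unfolding uadj_def sym_def by blast

lemma uadj_rtr_sym: "(a,b) \<in> (uadj s t Z)\<^sup>* \<Longrightarrow> (b,a) \<in> (uadj s t Z)\<^sup>*"
  using sym_rtrancl[OF uadj_sym] by (meson symD)

lemma uadj_mono: "Z' \<subseteq> Z \<Longrightarrow> (uadj s t Z')\<^sup>* \<subseteq> (uadj s t Z)\<^sup>*"
  by (rule rtrancl_mono) (auto simp: uadj_def)

lemma uadj_edge: "e \<in> Z \<Longrightarrow> (s e, t e) \<in> uadj s t Z \<and> (t e, s e) \<in> uadj s t Z"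
  unfolding uadj_def by auto

lemma rtrancl_spath:
  assumes "(x,y) \<in> (uadj s t Z)\<^sup>*" shows "\<exists>es vs. spath s t Z x y es vs"
  using assms
proof (induction rule: rtrancl_induct)
  case base
  have "spath s t Z x x [] [x]" by (simp add: spath_def)
  then show ?case by blast
next
  case (step y z)
  then obtain es vs where P: "spath s t Z x y es vs" by blast
  from step(2) obtain e where e: "e \<in> Z" "{s e, t e} = {y, z}" unfolding uadj_def by auto
  show ?case
  proof (cases "z \<in> set vs")
    case True
    then obtain k where k: "k < length vs" "vs!k = z" by (auto simp: in_set_conv_nth)
    have lk: "k \<le> length es" using k P by (simp add: spath_def)
    have "spath s t Z x z (take k es) (take (Suc k) vs)"
      unfolding spath_def
    proof (intro conjI allI impI)
      show "length (take (Suc k) vs) = Suc (length (take k es))" using k lk by simp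
      show "take (Suc k) vs ! 0 = x" using P by (simp add: spath_def)
      show "take (Suc k) vs ! length (take k es) = z" using k lk by simp
      show "set (take k es) \<subseteq> Z" using P set_take_subset by (fastforce simp: spath_def)
      show "distinct (take (Suc k) vs)" using P by (simp add: spath_def)
    next
      fix i assume "i < length (take k es)"
      then show "{s (take k es ! i), t (take k es ! i)} = {take (Suc k) vs ! i, take (Suc k) vs ! Suc i}"
        using P by (simp add: spath_def)
    qed
    then show ?thesis by blast
  next
    case False
    have "spath s t Z x z (es @ [e]) (vs @ [z])"
      unfolding spath_def
    proof (intro conjI allI impI)
      show "length (vs @ [z]) = Suc (length (es @ [e]))" using P by (simp add: spath_def)
      show "(vs @ [z]) ! 0 = x" using P by (simp add: spath_def nth_append)
      show "(vs @ [z]) ! length (es @ [e]) = z" using P by (simp add: spath_def nth_append)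
      show "set (es @ [e]) \<subseteq> Z" using P e by (simp add: spath_def)
      show "distinct (vs @ [z])" using P False by (simp add: spath_def)
    next
      fix i assume i: "i < length (es @ [e])"
      show "{s ((es @ [e]) ! i), t ((es @ [e]) ! i)} = {(vs @ [z]) ! i, (vs @ [z]) ! Suc i}"
      proof (cases "i < length es")
        case True
        then show ?thesis using P by (simp add: spath_def nth_append)
      next
        case False
        then have "i = length es" using i by simp
        then show ?thesis using P e by (simp add: spath_def nth_append)
      qed
    qed
    then show ?thesis by blast
  qed
qed

lemma spath_distinct:
  assumes "spath s t Z x y es vs" shows "distinct es"
proof -
  from assms have L: "length vs = Suc (length es)" and dv: "distinct vs"
    and c: "\<forall>i<length es. {s (es!i), t (es!i)} = {vs!i, vs!(Suc i)}"
    unfolding spath_def by auto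
  show ?thesis
  proof (rule distinct_conv_nth[THEN iffD2], intro allI impI)
    fix i j assume ij: "i < length es" "j < length es" "i \<noteq> j"
    show "es ! i \<noteq> es ! j"
    proof
      assume eq: "es ! i = es ! j"
      have "{vs!i, vs!(Suc i)} = {vs!j, vs!(Suc j)}" using c ij eq by metis
      then have "vs!i = vs!j \<or> vs!i = vs!(Suc j)" by blast
      moreover have "vs!j = vs!i \<or> vs!j = vs!(Suc i)" using \<open>{vs!i, vs!(Suc i)} = _\<close> by blast
      ultimately show False using dv ij L by (auto simp: nth_eq_iff_index_eq)
    qed
  qed
qed

lemma spath_cycle:
  assumes P: "spath s t Z x y es vs" and eZ: "e \<notin> Z" and ee: "{s e, t e} = {y, x}"
  shows "ucycle s t (insert e Z) (es @ [e]) vs"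
proof -
  from P have L: "length vs = Suc (length es)" and dv: "distinct vs" and v0: "vs!0 = x"
    and vl: "vs!(length es) = y" and sub: "set es \<subseteq> Z"
    and c: "\<forall>i<length es. {s (es!i), t (es!i)} = {vs!i, vs!(Suc i)}"
    unfolding spath_def by auto
  have de: "distinct es" using P by (rule spath_distinct)
  show ?thesis unfolding ucycle_def
  proof (intro conjI allI impI)
    show "es @ [e] \<noteq> []" by simp
    show "length vs = length (es @ [e])" using L by simp
    show "distinct (es @ [e])" using de sub eZ by auto
    show "distinct vs" by (rule dv)
    show "set (es @ [e]) \<subseteq> insert e Z" using sub by auto
  next
    fix i assume i: "i < length (es @ [e])"
    show "{s ((es @ [e]) ! i), t ((es @ [e]) ! i)} = {vs ! i, vs ! ((i + 1) mod length (es @ [e]))}"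
    proof (cases "i < length es")
      case True
      then show ?thesis using c by (simp add: nth_append)
    next
      case False
      then have "i = length es" using i by simp
      then show ?thesis using ee v0 vl by (simp add: nth_append insert_commute)
    qed
  qed
qed

lemma Theta_outdeg:
  assumes Th: "Z \<in> Theta V E s t F B" and finV: "finite V"
    and inV: "\<forall>e\<in>Z. s e \<in> V \<and> t e \<in> V"
    and e1: "e1 \<in> Z" and e2: "e2 \<in> Z" and eq: "s e1 = s e2"
  shows "e1 = e2"
proof (rule ccontr)
  assume ne: "e1 \<noteq> e2"
  define v where "v = s e2"
  define Z' where "Z' = Z - {e2}"
  from Th have uac: "uacyclic s t Z" unfolding Theta_def by auto
  have noc: False if "ucycle s t Z es vs" for es vs using uac that unfolding uacyclic_def by blast
  have Z'Z: "Z' \<subseteq> Z" by (auto simp: Z'_def)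
  show False
  proof (cases "(v, t e2) \<in> (uadj s t Z')\<^sup>*")
    case True
    then obtain es vs where "spath s t Z' v (t e2) es vs" using rtrancl_spath by blast
    then have "ucycle s t (insert e2 Z') (es@[e2]) vs" by (rule spath_cycle) (auto simp: Z'_def v_def)
    moreover have "insert e2 Z' = Z" using e2 Z'_def by auto
    ultimately show False using noc by auto
  next
    case False
    define D where "D = {u\<in>V. (t e2, u) \<in> (uadj s t Z')\<^sup>*}"
    define D' where "D' = {u\<in>V. (v, u) \<in> (uadj s t Z')\<^sup>*}"
    define C where "C = {y\<in>V. (v,y) \<in> (uadj s t Z)\<^sup>*}"
    have vV: "v \<in> V" using inV e2 v_def by auto
    have "C \<in> comps V s t Z" unfolding comps_def C_def using vV by auto
    moreover have "\<forall>C\<in>comps V s t Z. C \<inter> F \<noteq> {} \<and> (\<exists>r\<in>B \<inter> C. {v\<in>C. \<not> (\<exists>e\<in>Z. s e = v)} = {r})"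
      using Th unfolding Theta_def by (elim CollectE conjE) assumption
    ultimately obtain r where r: "{u\<in>C. \<not>(\<exists>e\<in>Z. s e = u)} = {r}" by (metis (no_types, lifting))
    have ve2: "(v, t e2) \<in> (uadj s t Z)\<^sup>*" using uadj_edge[OF e2] v_def by auto
    have DC: "D \<subseteq> C"
    proof
      fix u assume "u \<in> D"
      then have uV: "u \<in> V" and "(t e2, u) \<in> (uadj s t Z')\<^sup>*" unfolding D_def by auto
      then have "(t e2, u) \<in> (uadj s t Z)\<^sup>*" using uadj_mono[OF Z'Z] by blast
      then have "(v, u) \<in> (uadj s t Z)\<^sup>*" by (rule rtrancl_trans[OF ve2])
      then show "u \<in> C" using uV unfolding C_def by simp
    qed
    have D'C: "D' \<subseteq> C"
    proof
      fix u assume "u \<in> D'"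
      then have uV: "u \<in> V" and "(v, u) \<in> (uadj s t Z')\<^sup>*" unfolding D'_def by auto
      then have "(v, u) \<in> (uadj s t Z)\<^sup>*" using uadj_mono[OF Z'Z] by blast
      then show "u \<in> C" using uV unfolding C_def by simp
    qed
    have vD: "v \<notin> D"
    proof
      assume "v \<in> D"
      then have "(t e2, v) \<in> (uadj s t Z')\<^sup>*" unfolding D_def by simp
      then have "(v, t e2) \<in> (uadj s t Z')\<^sup>*" by (rule uadj_rtr_sym)
      then show False using False by simp
    qed
    have disj: "r \<notin> D \<or> r \<notin> D'"
    proof (rule ccontr)
      assume "\<not> (r \<notin> D \<or> r \<notin> D')"
      then have "(t e2, r) \<in> (uadj s t Z')\<^sup>*" "(v, r) \<in> (uadj s t Z')\<^sup>*" unfolding D_def D'_def by auto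
      then have "(v, t e2) \<in> (uadj s t Z')\<^sup>*" using uadj_rtr_sym rtrancl_trans by metis
      then show False using False by simp
    qed
    have nsink: "\<exists>e\<in>Z. s e = u" if "u \<in> C" "u \<noteq> r" for u
    proof -
      have "u \<notin> {u\<in>C. \<not>(\<exists>e\<in>Z. s e = u)}" using r that by simp
      then show ?thesis using that by simp
    qed
    show False
    proof (cases "r \<notin> D")
      case True
      have "\<exists>es. dcycle s t Z es"
      proof (rule sinkfree_dcycle)
        show "finite D" using finV by (simp add: D_def)
        show "D \<noteq> {}" using inV e2 by (auto simp: D_def)
        show "\<forall>u\<in>D. \<exists>e\<in>Z. s e = u \<and> t e \<in> D"
        proof
          fix u assume u: "u \<in> D"
          have "u \<noteq> r" using True u by blast
          then obtain e where e: "e \<in> Z" "s e = u" using nsink u DC by blast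
          have "e \<noteq> e2" using vD u e v_def by auto
          then have "e \<in> Z'" using e Z'_def by auto
          then have "(u, t e) \<in> uadj s t Z'" using uadj_edge[of e Z' s t] e by simp
          then have "t e \<in> D" using u e(1) inV unfolding D_def by (auto intro: rtrancl_into_rtrancl)
          then show "\<exists>e\<in>Z. s e = u \<and> t e \<in> D" using e by blast
        qed
      qed
      then show False using dcycle_ucycle noc by blast
    next
      case False
      then have rD': "r \<notin> D'" using disj by simp
      have "\<exists>es. dcycle s t Z es"
      proof (rule sinkfree_dcycle)
        show "finite D'" using finV by (simp add: D'_def)
        show "D' \<noteq> {}" using vV by (auto simp: D'_def)
        show "\<forall>u\<in>D'. \<exists>e\<in>Z. s e = u \<and> t e \<in> D'"
        proof
          fix u assume u: "u \<in> D'"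
          have "u \<noteq> r" using rD' u by blast
          then obtain e where e: "e \<in> Z" "s e = u" using nsink u D'C by blast
          show "\<exists>e\<in>Z. s e = u \<and> t e \<in> D'"
          proof (cases "e = e2")
            case True
            have "e1 \<in> Z'" using e1 ne Z'_def by auto
            moreover have "s e1 = u" using True e eq by simp
            ultimately have "(u, t e1) \<in> uadj s t Z'" using uadj_edge[of e1 Z' s t] by simp
            then have "t e1 \<in> D'" using u e1 inV unfolding D'_def by (auto intro: rtrancl_into_rtrancl)
            then show ?thesis using e1 \<open>s e1 = u\<close> by blast
          next
            case False
            then have "e \<in> Z'" using e Z'_def by auto
            then have "(u, t e) \<in> uadj s t Z'" using uadj_edge[of e Z' s t] e by simp
            then have "t e \<in> D'" using u e(1) inV unfolding D'_def by (auto intro: rtrancl_into_rtrancl)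
            then show ?thesis using e by blast
          qed
        qed
      qed
      then show False using dcycle_ucycle noc by blast
    qed
  qed
qed

lemma ThetaD: "Z \<in> Theta V E s t F B \<Longrightarrow> Z \<subseteq> E \<and> uacyclic s t Z \<and> card (comps V s t Z) = card B
     \<and> (\<forall>C\<in>comps V s t Z. C \<inter> F \<noteq> {}
          \<and> (\<exists>r\<in>B \<inter> C. {v\<in>C. \<not> (\<exists>e\<in>Z. s e = v)} = {r}))"
  by (simp add: Theta_def)

lemma ThetaI: "Z \<subseteq> E \<Longrightarrow> uacyclic s t Z \<Longrightarrow> card (comps V s t Z) = card B
     \<Longrightarrow> (\<forall>C\<in>comps V s t Z. C \<inter> F \<noteq> {}
          \<and> (\<exists>r\<in>B \<inter> C. {v\<in>C. \<not> (\<exists>e\<in>Z. s e = v)} = {r})) \<Longrightarrow> Z \<in> Theta V E s t F B"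
  by (simp add: Theta_def)

locale fg =
  fixes V :: "nat set" and s t :: "'e \<Rightarrow> nat" and Z :: "'e set"
  assumes finV: "finite V"
    and inV: "\<forall>e\<in>Z. s e \<in> V \<and> t e \<in> V"
    and noloop: "\<forall>e\<in>Z. s e \<noteq> t e"
    and outdeg: "\<forall>e1\<in>Z. \<forall>e2\<in>Z. s e1 = s e2 \<longrightarrow> e1 = e2"
    and nodc: "\<not>(\<exists>es. dcycle s t Z es)"
begin

lemma oe: "\<not> sinkf s Z v \<Longrightarrow> oef s Z v \<in> Z \<and> s (oef s Z v) = v"
proof -
  assume "\<not> sinkf s Z v"
  then obtain e where e: "e \<in> Z" "s e = v" unfolding sinkf_def by auto
  have "oef s Z v = e" unfolding oef_def using e outdeg by (intro the_equality) auto
  then show ?thesis using e by simp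
qed

lemma oe_eq: "e \<in> Z \<Longrightarrow> oef s Z (s e) = e"
  unfolding oef_def using outdeg by (intro the_equality) auto

lemma nsink_edge: "e \<in> Z \<Longrightarrow> \<not> sinkf s Z (s e)" unfolding sinkf_def by auto

lemma g_edge: "e \<in> Z \<Longrightarrow> gf s t Z (s e) = t e"
  using oe_eq nsink_edge unfolding gf_def by simp

lemma g_nsink: "\<not> sinkf s Z v \<Longrightarrow> gf s t Z v = t (oef s Z v)"
  unfolding gf_def by simp

lemma g_sink: "sinkf s Z v \<Longrightarrow> gf s t Z v = v"
  unfolding gf_def by simp

lemma g_V: "v \<in> V \<Longrightarrow> gf s t Z v \<in> V"
  using oe inV unfolding gf_def by auto

lemma gpow_V: "v \<in> V \<Longrightarrow> (gf s t Z ^^ n) v \<in> V"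
  by (induction n) (auto simp: g_V)

lemma gpow_Suc: "(gf s t Z ^^ n) (gf s t Z u) = (gf s t Z ^^ Suc n) u"
  by (simp add: funpow_swap1)

lemma reach: "v \<in> V \<Longrightarrow> \<exists>n. sinkf s Z ((gf s t Z ^^ n) v)"
proof (rule ccontr)
  assume v: "v \<in> V" and nr: "\<not> (\<exists>n. sinkf s Z ((gf s t Z ^^ n) v))"
  define D where "D = {u\<in>V. \<forall>n. \<not> sinkf s Z ((gf s t Z ^^ n) u)}"
  have "\<exists>es. dcycle s t Z es"
  proof (rule sinkfree_dcycle)
    show "finite D" using finV by (simp add: D_def)
    show "D \<noteq> {}" using v nr by (auto simp: D_def)
    show "\<forall>u\<in>D. \<exists>e\<in>Z. s e = u \<and> t e \<in> D"
    proof
      fix u assume u: "u \<in> D"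
      then have ns: "\<not> sinkf s Z u" unfolding D_def by (metis (mono_tags, lifting) funpow_0 mem_Collect_eq)
      have "\<not> sinkf s Z ((gf s t Z ^^ n) (gf s t Z u))" for n
        using u unfolding gpow_Suc D_def by blast
      then have "gf s t Z u \<in> D" using u g_V unfolding D_def by auto
      then show "\<exists>e\<in>Z. s e = u \<and> t e \<in> D" using oe[OF ns] g_nsink[OF ns] by metis
    qed
  qed
  then show False using nodc by simp
qed

lemma root_sink: "v \<in> V \<Longrightarrow> sinkf s Z (rootf s t Z v)"
  unfolding rootf_def hf_def using reach by (rule LeastI_ex)

lemma h_less: "n < hf s t Z v \<Longrightarrow> \<not> sinkf s Z ((gf s t Z ^^ n) v)"
  unfolding hf_def by (rule not_less_Least)

lemma h_eq: "sinkf s Z ((gf s t Z ^^ n) v) \<Longrightarrow> (\<forall>p<n. \<not> sinkf s Z ((gf s t Z ^^ p) v)) \<Longrightarrow> hf s t Z v = n"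
  unfolding hf_def by (rule Least_equality) (auto simp: not_le[symmetric])

lemma h_sink0: "sinkf s Z v \<Longrightarrow> hf s t Z v = 0"
  by (rule h_eq) auto

lemma root_sink0: "sinkf s Z v \<Longrightarrow> rootf s t Z v = v"
  unfolding rootf_def using h_sink0 by simp

lemma h_step: assumes v: "v \<in> V" and ns: "\<not> sinkf s Z v"
  shows "hf s t Z v = Suc (hf s t Z (gf s t Z v)) \<and> rootf s t Z (gf s t Z v) = rootf s t Z v"
proof -
  define N where "N = hf s t Z (gf s t Z v)"
  have gv: "gf s t Z v \<in> V" using g_V v by simp
  have sN: "sinkf s Z ((gf s t Z ^^ Suc N) v)" using root_sink[OF gv]
    unfolding N_def rootf_def gpow_Suc by simp
  have "\<forall>p<Suc N. \<not> sinkf s Z ((gf s t Z ^^ p) v)"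
  proof (intro allI impI)
    fix p assume p: "p < Suc N"
    show "\<not> sinkf s Z ((gf s t Z ^^ p) v)"
    proof (cases p)
      case 0 then show ?thesis using ns by simp
    next
      case (Suc q)
      then have "q < N" using p by simp
      then have "\<not> sinkf s Z ((gf s t Z ^^ q) (gf s t Z v))" unfolding N_def by (rule h_less)
      then show ?thesis using Suc gpow_Suc by simp
    qed
  qed
  then have hv: "hf s t Z v = Suc N" using h_eq sN by blast
  have "rootf s t Z v = (gf s t Z ^^ Suc N) v" unfolding rootf_def hv ..
  also have "\<dots> = rootf s t Z (gf s t Z v)" unfolding rootf_def N_def gpow_Suc ..
  finally show ?thesis using hv N_def by simp
qed

lemma root_g: "v \<in> V \<Longrightarrow> rootf s t Z (gf s t Z v) = rootf s t Z v"
  using h_step g_sink by (cases "sinkf s Z v") auto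

lemma root_gpow: "v \<in> V \<Longrightarrow> rootf s t Z ((gf s t Z ^^ n) v) = rootf s t Z v"
  by (induction n) (auto simp: root_g gpow_V)

lemma root_V: "v \<in> V \<Longrightarrow> rootf s t Z v \<in> V"
  unfolding rootf_def by (rule gpow_V)

lemma edge_h: "e \<in> Z \<Longrightarrow> hf s t Z (s e) = Suc (hf s t Z (t e))"
  using h_step[of "s e"] inV nsink_edge g_edge by auto

lemma edge_root: "e \<in> Z \<Longrightarrow> rootf s t Z (s e) = rootf s t Z (t e)"
  using root_g[of "s e"] inV g_edge by auto

lemma gpow_h: "v \<in> V \<Longrightarrow> n \<le> hf s t Z v \<Longrightarrow> hf s t Z ((gf s t Z ^^ n) v) = hf s t Z v - n"
proof (induction n)
  case 0 then show ?case by simp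
next
  case (Suc n)
  define u where "u = (gf s t Z ^^ n) v"
  have uV: "u \<in> V" using gpow_V Suc u_def by simp
  have hu: "hf s t Z u = hf s t Z v - n" using Suc u_def by simp
  then have "\<not> sinkf s Z u" using h_sink0 Suc by fastforce
  then have "hf s t Z u = Suc (hf s t Z (gf s t Z u))" using h_step uV by blast
  then show ?case using hu u_def by simp
qed

lemma gpow_inj: "v \<in> V \<Longrightarrow> inj_on (\<lambda>n. (gf s t Z ^^ n) v) {0..hf s t Z v}"
proof (rule inj_onI)
  fix a b assume v: "v \<in> V" and a: "a \<in> {0..hf s t Z v}" and b: "b \<in> {0..hf s t Z v}"
    and eq: "(gf s t Z ^^ a) v = (gf s t Z ^^ b) v"
  have "hf s t Z v - a = hf s t Z v - b" using gpow_h[OF v] a b eq by (metis atLeastAtMost_iff)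
  then show "a = b" using a b by auto
qed

lemma path_step: assumes "p < hf s t Z v"
  shows "oef s Z ((gf s t Z ^^ p) v) \<in> Z \<and> s (oef s Z ((gf s t Z ^^ p) v)) = (gf s t Z ^^ p) v
      \<and> t (oef s Z ((gf s t Z ^^ p) v)) = (gf s t Z ^^ Suc p) v"
  using h_less[OF assms] oe g_nsink by simp

lemma dpath_gpow:
  assumes v: "v \<in> V" and n: "n \<le> hf s t Z v" and ZE: "Z \<subseteq> E'"
  shows "dpath s t E' v ((gf s t Z ^^ n) v) (map (\<lambda>p. oef s Z ((gf s t Z ^^ p) v)) [0..<n])"
  unfolding dpath_def
proof (intro conjI allI impI)
  define es where "es = map (\<lambda>p. oef s Z ((gf s t Z ^^ p) v)) [0..<n]"
  show "set (map (\<lambda>p. oef s Z ((gf s t Z ^^ p) v)) [0..<n]) \<subseteq> E'"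
    using path_step n ZE by auto
  show "t (map (\<lambda>p. oef s Z ((gf s t Z ^^ p) v)) [0..<n] ! i) =
        s (map (\<lambda>p. oef s Z ((gf s t Z ^^ p) v)) [0..<n] ! (i + 1))" if "i + 1 < length (map (\<lambda>p. oef s Z ((gf s t Z ^^ p) v)) [0..<n])" for i
    using that path_step[of i] path_step[of "Suc i"] n by simp
  show "if map (\<lambda>p. oef s Z ((gf s t Z ^^ p) v)) [0..<n] = [] then v = (gf s t Z ^^ n) v
    else s (hd (map (\<lambda>p. oef s Z ((gf s t Z ^^ p) v)) [0..<n])) = v \<and>
         t (last (map (\<lambda>p. oef s Z ((gf s t Z ^^ p) v)) [0..<n])) = (gf s t Z ^^ n) v"
  proof (cases n)
    case 0 then show ?thesis by simp
  next
    case (Suc k)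
    have "s (hd (map (\<lambda>p. oef s Z ((gf s t Z ^^ p) v)) [0..<n])) = v"
      using path_step[of 0] n Suc by (simp add: hd_conv_nth del: upt_Suc)
    moreover have "t (last (map (\<lambda>p. oef s Z ((gf s t Z ^^ p) v)) [0..<n])) = (gf s t Z ^^ n) v"
      using path_step[of k] n Suc by (simp add: last_conv_nth del: upt_Suc)
    ultimately show ?thesis using Suc by simp
  qed
  have "map t (map (\<lambda>p. oef s Z ((gf s t Z ^^ p) v)) [0..<n]) = map (\<lambda>p. (gf s t Z ^^ Suc p) v) [0..<n]"
    using path_step n by simp
  moreover have "map (\<lambda>p. (gf s t Z ^^ p) v) [0..<Suc n] = (gf s t Z ^^ 0) v # map (\<lambda>p. (gf s t Z ^^ Suc p) v) [0..<n]"
    by (rule map_upt_Suc)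
  ultimately have "v # map t (map (\<lambda>p. oef s Z ((gf s t Z ^^ p) v)) [0..<n]) = map (\<lambda>p. (gf s t Z ^^ p) v) [0..<Suc n]"
    by (simp only: funpow_0)
  moreover have "distinct (map (\<lambda>p. (gf s t Z ^^ p) v) [0..<Suc n])"
  proof -
    have "{0..<Suc n} \<subseteq> {0..hf s t Z v}" using n by auto
    with gpow_inj[OF v] have "inj_on (\<lambda>p. (gf s t Z ^^ p) v) {0..<Suc n}" by (rule inj_on_subset)
    then show ?thesis by (simp add: distinct_map del: upt_Suc)
  qed
  ultimately show "distinct (v # map t (map (\<lambda>p. oef s Z ((gf s t Z ^^ p) v)) [0..<n]))" by metis
qed

end

context fg begin

lemma uadj_root: "(x,y) \<in> uadj s t Z \<Longrightarrow> x \<in> V \<and> y \<in> V \<and> rootf s t Z x = rootf s t Z y"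
  unfolding uadj_def using edge_root inV by fastforce

lemma rtr_root: assumes "x \<in> V" "(x,y) \<in> (uadj s t Z)\<^sup>*" shows "y \<in> V \<and> rootf s t Z y = rootf s t Z x"
  using assms(2)
proof (induction rule: rtrancl_induct)
  case base then show ?case using assms(1) by simp
next
  case (step y z) then show ?case using uadj_root by metis
qed

lemma to_gpow: "x \<in> V \<Longrightarrow> (x, (gf s t Z ^^ n) x) \<in> (uadj s t Z)\<^sup>*"
proof (induction n)
  case 0 then show ?case by simp
next
  case (Suc n)
  define u where "u = (gf s t Z ^^ n) x"
  have ug: "(u, gf s t Z u) \<in> (uadj s t Z)\<^sup>*"
  proof (cases "sinkf s Z u")
    case True then show ?thesis using g_sink by simp
  next
    case False
    then have "(u, gf s t Z u) \<in> uadj s t Z" using oe[OF False] g_nsink[OF False] uadj_edge by metis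
    then show ?thesis by simp
  qed
  have xu: "(x, u) \<in> (uadj s t Z)\<^sup>*" using Suc u_def by simp
  have eq: "(gf s t Z ^^ Suc n) x = gf s t Z u" using u_def by simp
  show ?case unfolding eq by (rule rtrancl_trans[OF xu ug])
qed

lemma to_root: "x \<in> V \<Longrightarrow> (x, rootf s t Z x) \<in> (uadj s t Z)\<^sup>*"
  unfolding rootf_def by (rule to_gpow)

lemma comp_eq: "x \<in> V \<Longrightarrow> {y\<in>V. (x,y) \<in> (uadj s t Z)\<^sup>*} = {y\<in>V. rootf s t Z y = rootf s t Z x}"
proof (intro equalityI subsetI)
  fix y assume "x \<in> V" "y \<in> {y\<in>V. (x,y) \<in> (uadj s t Z)\<^sup>*}"
  then have "x \<in> V" "(x,y) \<in> (uadj s t Z)\<^sup>*" "y \<in> V" by auto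
  then show "y \<in> {y\<in>V. rootf s t Z y = rootf s t Z x}" using rtr_root[of x y] by simp
next
  fix y assume x: "x \<in> V" and "y \<in> {y\<in>V. rootf s t Z y = rootf s t Z x}"
  then have y: "y \<in> V" and r: "rootf s t Z y = rootf s t Z x" by auto
  have "(x, rootf s t Z x) \<in> (uadj s t Z)\<^sup>*" using to_root x by simp
  moreover have "(rootf s t Z y, y) \<in> (uadj s t Z)\<^sup>*" using to_root[OF y] by (rule uadj_rtr_sym)
  ultimately have "(x, y) \<in> (uadj s t Z)\<^sup>*" unfolding r by (rule rtrancl_trans)
  then show "y \<in> {y\<in>V. (x,y) \<in> (uadj s t Z)\<^sup>*}" using y by simp
qed

lemma comps_eq: "comps V s t Z = (\<lambda>r. {y\<in>V. rootf s t Z y = r}) ` {v\<in>V. sinkf s Z v}"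
proof (intro equalityI subsetI)
  fix C assume "C \<in> comps V s t Z"
  then obtain x where x: "x \<in> V" and C: "C = {y\<in>V. (x,y) \<in> (uadj s t Z)\<^sup>*}" unfolding comps_def by auto
  then have "C = {y\<in>V. rootf s t Z y = rootf s t Z x}" using comp_eq by simp
  moreover have "rootf s t Z x \<in> {v\<in>V. sinkf s Z v}" using root_sink root_V x by simp
  ultimately show "C \<in> (\<lambda>r. {y\<in>V. rootf s t Z y = r}) ` {v\<in>V. sinkf s Z v}" by blast
next
  fix C assume "C \<in> (\<lambda>r. {y\<in>V. rootf s t Z y = r}) ` {v\<in>V. sinkf s Z v}"
  then obtain r where r: "r \<in> V" "sinkf s Z r" and C: "C = {y\<in>V. rootf s t Z y = r}" by auto
  have "C = {y\<in>V. (r,y) \<in> (uadj s t Z)\<^sup>*}" using comp_eq[OF r(1)] root_sink0[OF r(2)] C by simp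
  then show "C \<in> comps V s t Z" unfolding comps_def using r by auto
qed

lemma card_comps: "card (comps V s t Z) = card {v\<in>V. sinkf s Z v}"
proof -
  have "inj_on (\<lambda>r. {y\<in>V. rootf s t Z y = r}) {v\<in>V. sinkf s Z v}"
  proof (rule inj_onI)
    fix a b assume a: "a \<in> {v\<in>V. sinkf s Z v}" and b: "b \<in> {v\<in>V. sinkf s Z v}"
      and eq: "{y\<in>V. rootf s t Z y = a} = {y\<in>V. rootf s t Z y = b}"
    have "a \<in> {y\<in>V. rootf s t Z y = a}" using a root_sink0 by simp
    then have "a \<in> {y\<in>V. rootf s t Z y = b}" using eq by simp
    then show "a = b" using a root_sink0 by simp
  qed
  then show ?thesis unfolding comps_eq by (rule card_image)
qed

lemma uacyc: "uacyclic s t Z"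
  unfolding uacyclic_def
proof
  assume "\<exists>es vs. ucycle s t Z es vs"
  then obtain es vs where c: "ucycle s t Z es vs" by blast
  define L where "L = length es"
  from c have ne: "es \<noteq> []" and lv: "length vs = L" and de: "distinct es" and sub: "set es \<subseteq> Z"
    and cc: "\<forall>i<L. {s (es!i), t (es!i)} = {vs!i, vs!((i+1) mod L)}" unfolding ucycle_def L_def by auto
  have L0: "L > 0" using ne L_def by simp
  define H where "H = (\<lambda>i. hf s t Z (vs!i))"
  have finH: "finite (H ` {..<L})" by simp
  have "Max (H ` {..<L}) \<in> H ` {..<L}" using L0 finH by (intro Max_in) auto
  then obtain j where j: "j < L" "H j = Max (H ` {..<L})" by auto
  have jmax: "H i \<le> H j" if "i < L" for i using j finH that by simp
  have esZ: "es!i \<in> Z" if "i < L" for i using sub that L_def by auto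
  have claim: "s (es!i) = vs!j" if i: "i < L" and vj: "vs!j \<in> {vs!i, vs!((i+1) mod L)}" for i
  proof (rule ccontr)
    assume ns: "s (es!i) \<noteq> vs!j"
    have ci: "{s (es!i), t (es!i)} = {vs!i, vs!((i+1) mod L)}" using cc i by simp
    then have "vs!j \<in> {s (es!i), t (es!i)}" using vj by simp
    then have "t (es!i) = vs!j" using ns by auto
    have "s (es!i) = vs!i \<or> s (es!i) = vs!((i+1) mod L)" using ci by blast
    moreover have "(i+1) mod L < L" using L0 by simp
    ultimately have "hf s t Z (s (es!i)) \<le> H j" using jmax i unfolding H_def by auto
    moreover have "hf s t Z (s (es!i)) = Suc (H j)"
      using edge_h[OF esZ[OF i]] \<open>t (es!i) = vs!j\<close> unfolding H_def by simp
    ultimately show False by simp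
  qed
  have c1: "s (es!j) = vs!j" using claim j by simp
  define i2 where "i2 = (if j = 0 then L - 1 else j - 1)"
  have i2L: "i2 < L" using j L0 by (cases "j = 0") (auto simp: i2_def)
  have i2n: "(i2 + 1) mod L = j" using j L0 by (auto simp: i2_def)
  have c2: "s (es!i2) = vs!j" using claim[OF i2L] i2n by simp
  have "es!j = es!i2" using outdeg esZ[OF j(1)] esZ[OF i2L] c1 c2 by metis
  then have ji: "j = i2" using de j i2L L_def by (simp add: nth_eq_iff_index_eq)
  show False
  proof (cases "L = 1")
    case True
    then have "{s (es!0), t (es!0)} = {vs!0}" using cc by auto
    then have "s (es!0) = t (es!0)" by auto
    then show False using noloop esZ[of 0] L0 by auto
  next
    case False
    then show False using ji L0 j by (auto simp: i2_def split: if_splits)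
  qed
qed

lemma Theta_iff:
  assumes ZE: "Z \<subseteq> E" and FV: "F \<subseteq> V" and finB: "finite B"
  shows "Z \<in> Theta V E s t F B \<longleftrightarrow> ({v\<in>V. sinkf s Z v} = B \<and> (\<forall>r\<in>B. \<exists>f\<in>F. rootf s t Z f = r))"
proof
  assume Th: "Z \<in> Theta V E s t F B"
  from ThetaD[OF Th] have cB: "card (comps V s t Z) = card B"
    and CC: "\<forall>C\<in>comps V s t Z. C \<inter> F \<noteq> {} \<and> (\<exists>r\<in>B \<inter> C. {v\<in>C. \<not> (\<exists>e\<in>Z. s e = v)} = {r})"
    by auto
  have compin: "{y\<in>V. (x,y) \<in> (uadj s t Z)\<^sup>*} \<in> comps V s t Z" if "x \<in> V" for x
    unfolding comps_def using that by auto
  have sub: "{v\<in>V. sinkf s Z v} \<subseteq> B"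
  proof
    fix v assume v: "v \<in> {v\<in>V. sinkf s Z v}"
    define C where "C = {y\<in>V. (v,y) \<in> (uadj s t Z)\<^sup>*}"
    have "C \<in> comps V s t Z" using compin v C_def by simp
    then have "\<exists>r\<in>B \<inter> C. {u\<in>C. \<not> (\<exists>e\<in>Z. s e = u)} = {r}" using CC by simp
    then obtain r where r0: "r \<in> B \<inter> C" and r1: "{u\<in>C. \<not> (\<exists>e\<in>Z. s e = u)} = {r}" by (rule bexE)
    from r0 r1 have r: "r \<in> B" "{u\<in>C. \<not> (\<exists>e\<in>Z. s e = u)} = {r}" by auto
    have vin: "v \<in> {u\<in>C. \<not> (\<exists>e\<in>Z. s e = u)}" using v unfolding C_def sinkf_def by simp
    have "v \<in> {r}" unfolding r(2)[symmetric] by (rule vin)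
    then show "v \<in> B" using r(1) by simp
  qed
  have eqB: "{v\<in>V. sinkf s Z v} = B"
    using card_subset_eq[OF finB sub] cB card_comps by simp
  moreover have "\<forall>r\<in>B. \<exists>f\<in>F. rootf s t Z f = r"
  proof
    fix r assume "r \<in> B"
    then have r: "r \<in> V" "sinkf s Z r" using eqB by auto
    define C where "C = {y\<in>V. (r,y) \<in> (uadj s t Z)\<^sup>*}"
    have "C \<in> comps V s t Z" using compin r C_def by simp
    then have "C \<inter> F \<noteq> {}" using CC by simp
    then obtain f where f: "f \<in> C" "f \<in> F" by blast
    have "C = {y\<in>V. rootf s t Z y = r}" using comp_eq[OF r(1)] root_sink0[OF r(2)] C_def by simp
    then show "\<exists>f\<in>F. rootf s t Z f = r" using f by auto
  qed
  ultimately show "{v\<in>V. sinkf s Z v} = B \<and> (\<forall>r\<in>B. \<exists>f\<in>F. rootf s t Z f = r)" by simp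
next
  assume A: "{v\<in>V. sinkf s Z v} = B \<and> (\<forall>r\<in>B. \<exists>f\<in>F. rootf s t Z f = r)"
  then have eqB: "{v\<in>V. sinkf s Z v} = B" and sur: "\<forall>r\<in>B. \<exists>f\<in>F. rootf s t Z f = r" by auto
  show "Z \<in> Theta V E s t F B"
  proof (rule ThetaI[OF ZE uacyc])
    show "card (comps V s t Z) = card B" using card_comps eqB by simp
    show "\<forall>C\<in>comps V s t Z. C \<inter> F \<noteq> {} \<and> (\<exists>r\<in>B \<inter> C. {v\<in>C. \<not> (\<exists>e\<in>Z. s e = v)} = {r})"
    proof
      fix C assume "C \<in> comps V s t Z"
      then obtain r where r: "r \<in> V" "sinkf s Z r" and C: "C = {y\<in>V. rootf s t Z y = r}"
        unfolding comps_eq by auto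
      have rB: "r \<in> B" using eqB r by auto
      then obtain f where f: "f \<in> F" "rootf s t Z f = r" using sur by auto
      have "f \<in> C" using f FV C by auto
      moreover have "r \<in> C" using r C root_sink0 by simp
      moreover have "{v\<in>C. \<not> (\<exists>e\<in>Z. s e = v)} = {r}"
      proof (intro equalityI subsetI)
        fix v assume "v \<in> {v\<in>C. \<not> (\<exists>e\<in>Z. s e = v)}"
        then have "v \<in> C" "sinkf s Z v" unfolding sinkf_def by auto
        then show "v \<in> {r}" using C root_sink0 by auto
      next
        fix v assume "v \<in> {r}"
        then show "v \<in> {v\<in>C. \<not> (\<exists>e\<in>Z. s e = v)}" using \<open>r \<in> C\<close> r(2) unfolding sinkf_def by simp
      qed
      ultimately show "C \<inter> F \<noteq> {} \<and> (\<exists>r\<in>B \<inter> C. {v\<in>C. \<not> (\<exists>e\<in>Z. s e = v)} = {r})"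
        using f rB by blast
    qed
  qed
qed

end

lemma Theta_fg:
  assumes Th: "Z \<in> Theta V E s t F B" and finV: "finite V"
    and EV: "\<forall>e\<in>E. s e \<in> V \<and> t e \<in> V \<and> s e \<noteq> t e"
  shows "fg V s t Z"
proof -
  from ThetaD[OF Th] have ZE: "Z \<subseteq> E" and uac: "uacyclic s t Z" by auto
  have inV: "\<forall>e\<in>Z. s e \<in> V \<and> t e \<in> V" using ZE EV by blast
  show ?thesis
  proof
    show "finite V" by (rule finV)
    show "\<forall>e\<in>Z. s e \<in> V \<and> t e \<in> V" by (rule inV)
    show "\<forall>e\<in>Z. s e \<noteq> t e" using ZE EV by blast
    show "\<forall>e1\<in>Z. \<forall>e2\<in>Z. s e1 = s e2 \<longrightarrow> e1 = e2" using Theta_outdeg[OF Th finV inV] by blast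
    show "\<not> (\<exists>es. dcycle s t Z es)" using dcycle_ucycle uac unfolding uacyclic_def by blast
  qed
qed

lemma fg_agree:
  assumes A: "fg V s t Z" and A': "fg V s t Z'" and snk: "\<forall>v. sinkf s Z' v = sinkf s Z v"
    and x: "x \<in> V" and cond: "\<forall>n < hf s t Z x. oef s Z ((gf s t Z ^^ n) x) \<in> Z'"
  shows "(\<forall>n \<le> hf s t Z x. (gf s t Z' ^^ n) x = (gf s t Z ^^ n) x) \<and> hf s t Z' x = hf s t Z x
       \<and> rootf s t Z' x = rootf s t Z x"
proof -
  have it: "(gf s t Z' ^^ n) x = (gf s t Z ^^ n) x" if "n \<le> hf s t Z x" for n
    using that
  proof (induction n)
    case 0 then show ?case by simp
  next
    case (Suc n)
    define u where "u = (gf s t Z ^^ n) x"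
    have nl: "n < hf s t Z x" using Suc by simp
    have ns: "\<not> sinkf s Z u" using fg.h_less[OF A, OF nl] u_def by simp
    have oZ: "oef s Z u \<in> Z" "s (oef s Z u) = u" using fg.oe[OF A, OF ns] by auto
    have oZ': "oef s Z u \<in> Z'" using cond nl u_def by simp
    have "oef s Z' u = oef s Z u" using fg.oe_eq[OF A', OF oZ'] oZ by simp
    moreover have ns': "\<not> sinkf s Z' u" using ns snk by simp
    ultimately have "gf s t Z' u = gf s t Z u" using fg.g_nsink[OF A, OF ns] fg.g_nsink[OF A', OF ns'] by simp
    then show ?case using Suc u_def by simp
  qed
  have hh: "hf s t Z' x = hf s t Z x"
  proof (rule fg.h_eq[OF A'])
    show "sinkf s Z' ((gf s t Z' ^^ hf s t Z x) x)" using it[of "hf s t Z x"] fg.root_sink[OF A, OF x] snk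
      unfolding rootf_def by simp
    show "\<forall>p<hf s t Z x. \<not> sinkf s Z' ((gf s t Z' ^^ p) x)" using it fg.h_less[OF A] snk by simp
  qed
  show ?thesis using it hh unfolding rootf_def by simp
qed

abbreviation S1 :: "(nat \<Rightarrow> nat) \<Rightarrow> nat \<Rightarrow> nat" where "S1 mm i \<equiv> (\<Sum>j\<in>{1..i}. mm j)"

lemma msum_split: "msum mm d = mm 0 + S1 mm d"
  unfolding msum_def by (simp add: sum.atLeast_Suc_atMost)

lemma Nblk_i: "i \<in> {1..d} \<Longrightarrow> Nblk mm d i = {1 + (\<Sum>j\<in>{1..<i}. mm j) .. S1 mm i}"
  unfolding Nblk_def by auto

lemma S1_mono: "i \<le> i' \<Longrightarrow> S1 mm i \<le> S1 mm i'"
  by (rule sum_mono2) auto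

lemma Nblk_sub: "i \<in> {1..d} \<Longrightarrow> Nblk mm d i \<subseteq> {1..S1 mm d}"
  using Nblk_i[of i d mm] S1_mono[of i d mm] by auto

lemma Nblk0: "Nblk mm d 0 = {S1 mm d + 1 .. msum mm d + 1}"
  unfolding Nblk_def using msum_split[of mm d] by simp

lemma Nblk_dp1: "Nblk mm d (d+1) = {msum mm d + 1}"
  unfolding Nblk_def by simp

lemma Nblk_disj: assumes "i \<in> {1..d}" "i' \<in> {1..d}" "i < i'"
  shows "Nblk mm d i \<inter> Nblk mm d i' = {}"
proof -
  have "S1 mm i \<le> (\<Sum>j\<in>{1..<i'}. mm j)" by (rule sum_mono2) (use assms in auto)
  then show ?thesis using Nblk_i[OF assms(1)] Nblk_i[OF assms(2)] by auto
qed

lemma Nblk_disj0: "i \<in> {1..d} \<Longrightarrow> Nblk mm d i \<inter> Nblk mm d 0 = {}"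
  using Nblk_sub[of i d mm] Nblk0[of mm d] by auto

lemma Nblk_cover:
  assumes y: "y \<in> {1..msum mm d + 1}"
  shows "y \<in> Nblk mm d 0 \<or> (\<exists>j\<in>{1..d}. y \<in> Nblk mm d j)"
proof (cases "y \<le> S1 mm d")
  case False then show ?thesis using y Nblk0[of mm d] by auto
next
  case True
  define j where "j = (LEAST j. y \<le> S1 mm j)"
  have yj: "y \<le> S1 mm j" unfolding j_def using True by (rule LeastI)
  have jd: "j \<le> d" unfolding j_def using True by (rule Least_le)
  have j0: "j \<noteq> 0" proof assume "j = 0" then show False using yj y by simp qed
  then obtain j' where j': "j = Suc j'" by (cases j) auto
  have "\<not> y \<le> S1 mm j'" unfolding j_def[symmetric] using j' by (metis j_def lessI not_less_Least)
  moreover have "{1..<j} = {1..j'}" using j' by auto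
  ultimately have "y \<in> Nblk mm d j" using Nblk_i[of j d mm] yj jd j0 by auto
  then show ?thesis using jd j0 by auto
qed

lemma pos_neg_disj: "Epos E \<pi> \<inter> Eneg E \<pi> = {}"
  unfolding Epos_def Eneg_def using less_asym by fastforce

lemma mu_star_prop:
  assumes Pg: "P_graph E s t \<pi> \<mu>" and x: "x \<in> im_mu E \<pi> \<mu>"
  shows "mu_star E \<pi> \<mu> x \<in> Eneg E \<pi> \<and> x \<in> \<mu> (mu_star E \<pi> \<mu> x) \<and> s (mu_star E \<pi> \<mu> x) = s x
     \<and> x \<in> Epos E \<pi>"
proof -
  from x obtain e where e: "e \<in> Eneg E \<pi>" "x \<in> \<mu> e" unfolding im_mu_def by auto
  from Pg have P3: "\<forall>e\<in>Eneg E \<pi>. \<mu> e \<subseteq> Epos E \<pi>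
          \<and> (\<forall>e'\<in>\<mu> e. s e' = s e)
          \<and> (\<forall>e'\<in>\<mu> e. \<forall>es. dcycle s t E es \<and> e' \<in> set es \<longrightarrow> t e \<in> set (map s es))
          \<and> (\<forall>e2\<in>Eneg E \<pi>. e2 \<noteq> e \<longrightarrow> \<mu> e \<inter> \<mu> e2 = {})
          \<and> \<pi> e + (\<Sum>e'\<in>\<mu> e. \<pi> e') \<ge> 0" unfolding P_graph_def by (elim conjE)
  have Pe: "\<mu> e \<subseteq> Epos E \<pi>
          \<and> (\<forall>e'\<in>\<mu> e. s e' = s e)
          \<and> (\<forall>e'\<in>\<mu> e. \<forall>es. dcycle s t E es \<and> e' \<in> set es \<longrightarrow> t e \<in> set (map s es))
          \<and> (\<forall>e2\<in>Eneg E \<pi>. e2 \<noteq> e \<longrightarrow> \<mu> e \<inter> \<mu> e2 = {})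
          \<and> \<pi> e + (\<Sum>e'\<in>\<mu> e. \<pi> e') \<ge> 0" by (rule bspec[OF P3 e(1)])
  then have sub: "\<mu> e \<subseteq> Epos E \<pi>" by blast
  from Pe have src: "\<forall>e'\<in>\<mu> e. s e' = s e" by blast
  from Pe have dsj: "\<forall>e2\<in>Eneg E \<pi>. e2 \<noteq> e \<longrightarrow> \<mu> e \<inter> \<mu> e2 = {}" by blast
  have uniq: "e2 = e" if "e2 \<in> Eneg E \<pi>" "x \<in> \<mu> e2" for e2
  proof (rule ccontr)
    assume "e2 \<noteq> e"
    then have "\<mu> e \<inter> \<mu> e2 = {}" using dsj that(1) by blast
    then show False using e(2) that(2) by blast
  qed
  have "mu_star E \<pi> \<mu> x = e" unfolding mu_star_def
  proof (rule the_equality)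
    show "e \<in> Eneg E \<pi> \<and> x \<in> \<mu> e" using e by simp
    show "\<And>y. y \<in> Eneg E \<pi> \<and> x \<in> \<mu> y \<Longrightarrow> y = e" using uniq by blast
  qed
  then show ?thesis using e sub src by auto
qed

lemma Pg_dc: "P_graph E s t \<pi> \<mu> \<Longrightarrow> dcycle s t E es \<Longrightarrow> card {i. i < length es \<and> es!i \<in> Eneg E \<pi>} \<le> 1"
proof -
  assume "P_graph E s t \<pi> \<mu>" "dcycle s t E es"
  then have "\<forall>es. dcycle s t E es \<longrightarrow> card {i. i < length es \<and> es!i \<in> Eneg E \<pi>} \<le> 1"
    unfolding P_graph_def by (elim conjE)
  then show ?thesis using \<open>dcycle s t E es\<close> by simp
qed

lemma sep_roots:
  assumes sur: "\<forall>r\<in>B. \<exists>f\<in>F. R f = r" and F: "F = jj ` {1..d} \<union> {M}"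
    and cB: "card B = d + 1" and i: "i \<in> {1..d}"
  shows "R (jj i) \<noteq> R M"
proof
  assume eq: "R (jj i) = R M"
  have "B \<subseteq> R ` F" using sur by force
  also have "R ` F \<subseteq> (R \<circ> jj) ` ({1..d} - {i}) \<union> {R M}" using eq unfolding F by auto
  finally have "card B \<le> card ((R \<circ> jj) ` ({1..d} - {i}) \<union> {R M})" by (rule card_mono[rotated]) simp
  also have "\<dots> \<le> card ((R \<circ> jj) ` ({1..d} - {i})) + card {R M}" by (rule card_Un_le)
  also have "\<dots> \<le> card ({1..d} - {i}) + 1" using card_image_le[of "{1..d} - {i}" "R \<circ> jj"] by simp
  also have "\<dots> = d" using i by simp
  finally show False using cB by simp
qed

lemma blk0_root:
  assumes A: "fg V s t Z" and ZE: "Z \<subseteq> E" and cl: "\<forall>e\<in>E. s e \<in> N0 \<longrightarrow> t e \<in> N0"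
    and v: "v \<in> V" "v \<in> N0"
  shows "rootf s t Z v \<in> N0"
proof -
  have "(gf s t Z ^^ n) v \<in> N0" for n
  proof (induction n)
    case 0 then show ?case using v by simp
  next
    case (Suc n)
    define u where "u = (gf s t Z ^^ n) v"
    have "gf s t Z u \<in> N0"
    proof (cases "sinkf s Z u")
      case True then show ?thesis using fg.g_sink[OF A] Suc u_def by simp
    next
      case False
      then show ?thesis using fg.oe[OF A, OF False] fg.g_nsink[OF A, OF False] cl ZE Suc u_def by auto
    qed
    then show ?case using u_def by simp
  qed
  then show ?thesis unfolding rootf_def by simp
qed

lemma jj_avoid:
  assumes fgz: "fg V s t \<zeta>" and fgX: "fg V s t ZXX"
    and ZXX: "ZXX = (\<zeta> - X) \<union> ms ` X"
    and msneg: "\<forall>x\<in>X. ms x \<in> Eneg E \<pi>"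
    and disj: "ms ` X \<inter> \<zeta> = {}"
    and ZXE: "ZXX \<subseteq> E"
    and snk: "\<forall>v. sinkf s \<zeta> v = sinkf s ZXX v"
    and V: "V = {1..M+1}"
    and x: "x \<in> V" "x \<noteq> M+1"
    and sepr: "rootf s t ZXX x \<noteq> rootf s t ZXX (M+1)"
    and star1: "\<forall>l'\<in>{1..M}. \<forall>es. dpath s t E x l' es \<and> (\<exists>e\<in>set es. e \<in> Eneg E \<pi>) \<longrightarrow> M+1 \<in> set (x # map t es)"
  shows "\<forall>n < hf s t \<zeta> x. oef s \<zeta> ((gf s t \<zeta> ^^ n) x) \<notin> X"
proof -
  have MV: "M + 1 \<in> V" using V by simp
  have F2: "(gf s t ZXX ^^ n) x \<noteq> M+1" if "n \<le> hf s t ZXX x" for n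
  proof
    assume "(gf s t ZXX ^^ n) x = M+1"
    then have "rootf s t ZXX (M+1) = rootf s t ZXX x" using fg.root_gpow[OF fgX, OF x(1)] by metis
    then show False using sepr by simp
  qed
  have F3: "oef s ZXX ((gf s t ZXX ^^ n) x) \<notin> Eneg E \<pi>" if n: "n < hf s t ZXX x" for n
  proof
    assume neg: "oef s ZXX ((gf s t ZXX ^^ n) x) \<in> Eneg E \<pi>"
    define es where "es = map (\<lambda>p. oef s ZXX ((gf s t ZXX ^^ p) x)) [0..<Suc n]"
    have dp: "dpath s t E x ((gf s t ZXX ^^ Suc n) x) es"
      unfolding es_def by (rule fg.dpath_gpow[OF fgX, OF x(1) _ ZXE]) (use n in simp)
    have "(gf s t ZXX ^^ Suc n) x \<in> V" by (rule fg.gpow_V[OF fgX, OF x(1)])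
    moreover have "(gf s t ZXX ^^ Suc n) x \<noteq> M+1" by (rule F2) (use n in simp)
    ultimately have l: "(gf s t ZXX ^^ Suc n) x \<in> {1..M}" using V by auto
    have "oef s ZXX ((gf s t ZXX ^^ n) x) \<in> set es" unfolding es_def set_map set_upt by simp
    then have "\<exists>e\<in>set es. e \<in> Eneg E \<pi>" using neg by (rule bexI[rotated])
    then have "dpath s t E x ((gf s t ZXX ^^ Suc n) x) es \<and> (\<exists>e\<in>set es. e \<in> Eneg E \<pi>)" using dp by simp
    then have "M+1 \<in> set (x # map t es)" by (rule star1[rule_format, OF l])
    then have "M+1 = x \<or> M+1 \<in> t ` set es" by simp
    then show False
    proof
      assume "M+1 = x" then show False using x by simp
    next
      assume "M+1 \<in> t ` set es"
      then obtain e where e: "e \<in> set es" "M+1 = t e" by blast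
      from e(1) have "e \<in> (\<lambda>p. oef s ZXX ((gf s t ZXX ^^ p) x)) ` {0..<Suc n}" unfolding es_def set_map set_upt .
      then obtain p where p: "p < Suc n" "e = oef s ZXX ((gf s t ZXX ^^ p) x)" by auto
      have "p < hf s t ZXX x" using p n by simp
      then have "t (oef s ZXX ((gf s t ZXX ^^ p) x)) = (gf s t ZXX ^^ Suc p) x" using fg.path_step[OF fgX] by blast
      moreover have "(gf s t ZXX ^^ Suc p) x \<noteq> M+1" by (rule F2) (use p n in simp)
      ultimately show False using e p by simp
    qed
  qed
  have inz: "oef s ZXX ((gf s t ZXX ^^ n) x) \<in> \<zeta> \<and> oef s ZXX ((gf s t ZXX ^^ n) x) \<notin> X"
    if n: "n < hf s t ZXX x" for n
  proof -
    have "oef s ZXX ((gf s t ZXX ^^ n) x) \<in> ZXX" using fg.path_step[OF fgX, OF n] by simp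
    then show ?thesis using F3[OF n] msneg unfolding ZXX by auto
  qed
  have ag: "(\<forall>n \<le> hf s t ZXX x. (gf s t \<zeta> ^^ n) x = (gf s t ZXX ^^ n) x) \<and> hf s t \<zeta> x = hf s t ZXX x
       \<and> rootf s t \<zeta> x = rootf s t ZXX x"
  proof (rule fg_agree[OF fgX fgz])
    show "\<forall>v. sinkf s \<zeta> v = sinkf s ZXX v" by (rule snk)
    show "x \<in> V" by (rule x(1))
    show "\<forall>n<hf s t ZXX x. oef s ZXX ((gf s t ZXX ^^ n) x) \<in> \<zeta>" using inz by blast
  qed
  show ?thesis
  proof (intro allI impI)
    fix n assume n: "n < hf s t \<zeta> x"
    then have n': "n < hf s t ZXX x" using ag by simp
    have eqp: "(gf s t \<zeta> ^^ n) x = (gf s t ZXX ^^ n) x" using ag n' by simp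
    have "oef s ZXX ((gf s t ZXX ^^ n) x) \<in> \<zeta>" "s (oef s ZXX ((gf s t ZXX ^^ n) x)) = (gf s t ZXX ^^ n) x"
      using inz[OF n'] fg.path_step[OF fgX, OF n'] by auto
    then have "oef s \<zeta> ((gf s t ZXX ^^ n) x) = oef s ZXX ((gf s t ZXX ^^ n) x)" using fg.oe_eq[OF fgz] by metis
    then show "oef s \<zeta> ((gf s t \<zeta> ^^ n) x) \<notin> X" using eqp inz[OF n'] by simp
  qed
qed

schematic_goal lemma5p3_aux:
  fixes mm :: "nat \<Rightarrow> nat" and d :: nat
    and A :: "nat \<Rightarrow> nat \<Rightarrow> 'a::ordered_comm_ring" and b :: "nat \<Rightarrow> 'a"
    and jj :: "nat \<Rightarrow> nat"
    and E :: "'e set" and s t :: "'e \<Rightarrow> nat" and \<pi> :: "'e \<Rightarrow> 'a" and \<mu> :: "'e \<Rightarrow> 'e set"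
    and k lB :: nat and Bt :: "nat set" and \<zeta> E1 E2 :: "'e set"
  defines "m \<equiv> msum mm d"
  defines "F \<equiv> Fset mm d jj"
  defines "EF \<equiv> (\<lambda>Z. {X. X \<subseteq> Z \<inter> im_mu E \<pi> \<mu> \<and>
                 (Z - X) \<union> mu_star E \<pi> \<mu> ` X \<in> Theta {1..m+1} E s t F (Bt \<union> {lB})})"
  assumes blocks: "block_structure mm d A b jj"
    and graph: "multidigraph (m + 1) E s t"
    and compat: "A_compatible mm d A b jj E s t \<pi>"
    and Pg: "P_graph E s t \<pi> \<mu>"
    and star: "\<forall>l'\<in>{1..m}. \<forall>i\<in>{1..d}. \<forall>es. dpath s t E (jj i) l' es
                 \<and> (\<exists>e\<in>set es. e \<in> Eneg E \<pi>) \<longrightarrow> m + 1 \<in> set (jj i # map t es)"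
    and k: "k \<in> {1..d+1}"
    and Bt: "Bt \<in> Bk mm d k"
    and lB_mem: "lB \<in> {1..m+1} - Bt"
    and zeta: "\<zeta> \<in> Theta {1..m+1} E s t F (Bt \<union> {lB})"
    and E1: "E1 \<in> EF \<zeta>" and E2: "E2 \<in> EF \<zeta>"
  shows "E1 \<union> E2 \<in> EF \<zeta>"
proof -
  define V where "V = {1..m+1}"
  define B where "B = Bt \<union> {lB}"
  define ms where "ms = mu_star E \<pi> \<mu>"
  define ZX where "ZX X = (\<zeta> - X) \<union> ms ` X" for X
  define U where "U = E1 \<union> E2"
  have finV: "finite V" unfolding V_def by simp
  have EV: "\<forall>e\<in>E. s e \<in> V \<and> t e \<in> V \<and> s e \<noteq> t e" using graph unfolding multidigraph_def V_def by auto
  have EFD: "X \<subseteq> \<zeta> \<inter> im_mu E \<pi> \<mu> \<and> ZX X \<in> Theta V E s t F B" if "X \<in> EF \<zeta>" for X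
  proof -
    from that have "X \<subseteq> \<zeta> \<inter> im_mu E \<pi> \<mu> \<and> (\<zeta> - X) \<union> mu_star E \<pi> \<mu> ` X \<in> Theta {1..m+1} E s t F (Bt \<union> {lB})"
      unfolding EF_def by (rule CollectD)
    then show ?thesis unfolding ZX_def ms_def V_def B_def .
  qed
  have EF1: "E1 \<subseteq> \<zeta> \<inter> im_mu E \<pi> \<mu>" "ZX E1 \<in> Theta V E s t F B" using EFD[OF E1] by auto
  have EF2: "E2 \<subseteq> \<zeta> \<inter> im_mu E \<pi> \<mu>" "ZX E2 \<in> Theta V E s t F B" using EFD[OF E2] by auto
  have zT: "\<zeta> \<in> Theta V E s t F B" using zeta unfolding V_def B_def by simp
  have "\<exists>w. Bt = w ` ({1..d+1} - {k}) \<and> (\<forall>j\<in>{1..d+1} - {k}. w j \<in> Nblk mm d j)"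
    using Bt unfolding Bk_def by (rule CollectD)
  then obtain w where Btw: "Bt = w ` ({1..d+1} - {k})" and w: "\<forall>j\<in>{1..d+1} - {k}. w j \<in> Nblk mm d j"
    by (elim exE conjE)
  have jjN: "\<forall>i\<in>{1..d}. jj i \<in> Nblk mm d i" using blocks unfolding block_structure_def by blast
  have S1m: "S1 mm d \<le> m" using msum_split[of mm d] unfolding m_def by simp
  have jjV: "jj i \<in> V \<and> jj i \<noteq> m+1" if "i \<in> {1..d}" for i
    using jjN that Nblk_sub[OF that, of mm] S1m unfolding V_def by fastforce
  have FF: "F = jj ` {1..d} \<union> {m+1}" unfolding F_def Fset_def m_def by simp
  have FV: "F \<subseteq> V" using jjV unfolding FF V_def by auto
  have finBt: "finite Bt" using Btw by simp
  have finB: "finite B" using finBt unfolding B_def by simp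
  have winj: "inj_on w ({1..d+1} - {k})"
  proof (rule inj_onI)
    fix a b assume a: "a \<in> {1..d+1} - {k}" and b: "b \<in> {1..d+1} - {k}" and eq: "w a = w b"
    have wa: "w a \<in> Nblk mm d a" and wb: "w b \<in> Nblk mm d b" using w a b by auto
    have low: "w j \<le> m" if "j \<in> {1..d}" "w j \<in> Nblk mm d j" for j
      using Nblk_sub[OF that(1), of mm] that(2) S1m by auto
    show "a = b"
    proof (rule ccontr)
      assume ne: "a \<noteq> b"
      show False
      proof (cases "a = d+1 \<or> b = d+1")
        case True
        then show False
        proof
          assume ad: "a = d+1"
          then have "b \<in> {1..d}" using b ne by auto
          moreover have "w a = m+1" using wa ad Nblk_dp1[of mm d] unfolding m_def by simp
          ultimately show False using low wb eq by fastforce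
        next
          assume bd: "b = d+1"
          then have "a \<in> {1..d}" using a ne by auto
          moreover have "w b = m+1" using wb bd Nblk_dp1[of mm d] unfolding m_def by simp
          ultimately show False using low wa eq by fastforce
        qed
      next
        case False
        then have ad: "a \<in> {1..d}" and bd: "b \<in> {1..d}" using a b by auto
        show False
        proof (cases "a < b")
          case True then show False using Nblk_disj[OF ad bd True, of mm] wa wb eq by auto
        next
          case False
          then have "b < a" using ne by simp
          then show False using Nblk_disj[OF bd ad, of mm] wa wb eq by auto
        qed
      qed
    qed
  qed
  have cardBt: "card Bt = d" unfolding Btw card_image[OF winj] using k by simp
  have lBn: "lB \<notin> Bt" using lB_mem by simp
  have cardB: "card B = d + 1" unfolding B_def using cardBt lBn finBt by simp
  have fgz: "fg V s t \<zeta>" by (rule Theta_fg[OF zT finV EV])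
  have zE: "\<zeta> \<subseteq> E" using ThetaD[OF zT] by simp
  have msprop: "ms x \<in> Eneg E \<pi> \<and> s (ms x) = s x \<and> x \<in> Epos E \<pi>" if "x \<in> im_mu E \<pi> \<mu>" for x
    using mu_star_prop[OF Pg that] unfolding ms_def by blast
  have negE: "Eneg E \<pi> \<subseteq> E" unfolding Eneg_def by auto
  have msneg: "\<forall>x\<in>X. ms x \<in> Eneg E \<pi>" if "X \<subseteq> \<zeta> \<inter> im_mu E \<pi> \<mu>" for X
    using msprop that by blast
  have disjX: "ms ` X \<inter> \<zeta> = {}" if X: "X \<subseteq> \<zeta> \<inter> im_mu E \<pi> \<mu>" for X
  proof (rule ccontr)
    assume "ms ` X \<inter> \<zeta> \<noteq> {}"
    then obtain x where x: "x \<in> X" "ms x \<in> \<zeta>" by blast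
    have xz: "x \<in> \<zeta>" and xi: "x \<in> im_mu E \<pi> \<mu>" using x X by auto
    have "ms x = x" by (rule fg.outdeg[OF fgz, rule_format, OF x(2) xz]) (use msprop[OF xi] in simp)
    then have "x \<in> Epos E \<pi> \<inter> Eneg E \<pi>" using msprop[OF xi] by simp
    then show False using pos_neg_disj[of E \<pi>] by blast
  qed
  have ZXE: "ZX X \<subseteq> E" if X: "X \<subseteq> \<zeta> \<inter> im_mu E \<pi> \<mu>" for X
    using zE negE msneg[OF X] unfolding ZX_def by auto
  have snkX: "\<forall>v. sinkf s \<zeta> v = sinkf s (ZX X) v" if X: "X \<subseteq> \<zeta> \<inter> im_mu E \<pi> \<mu>" for X
  proof
    fix v
    have "(\<exists>e\<in>\<zeta>. s e = v) \<longleftrightarrow> (\<exists>e\<in>ZX X. s e = v)"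
    proof
      assume "\<exists>e\<in>\<zeta>. s e = v"
      then obtain e where e: "e \<in> \<zeta>" "s e = v" by blast
      show "\<exists>e\<in>ZX X. s e = v"
      proof (cases "e \<in> X")
        case True
        then have "ms e \<in> ZX X" "s (ms e) = v" using msprop X e unfolding ZX_def by auto
        then show ?thesis by blast
      next
        case False then show ?thesis using e unfolding ZX_def by blast
      qed
    next
      assume "\<exists>e\<in>ZX X. s e = v"
      then obtain e where e: "e \<in> ZX X" "s e = v" by blast
      then show "\<exists>e\<in>\<zeta>. s e = v"
      proof (cases "e \<in> \<zeta> - X")
        case True then show ?thesis using e by blast
      next
        case False
        then obtain x where x: "x \<in> X" "e = ms x" using e unfolding ZX_def by blast
        then have "x \<in> \<zeta>" "x \<in> im_mu E \<pi> \<mu>" using X by auto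
        moreover have "s x = v" using msprop[OF \<open>x \<in> im_mu E \<pi> \<mu>\<close>] x e by simp
        ultimately show ?thesis by blast
      qed
    qed
    then show "sinkf s \<zeta> v = sinkf s (ZX X) v" unfolding sinkf_def by simp
  qed
  have outX: "\<forall>e1\<in>ZX X. \<forall>e2\<in>ZX X. s e1 = s e2 \<longrightarrow> e1 = e2" if X: "X \<subseteq> \<zeta> \<inter> im_mu E \<pi> \<mu>" for X
  proof (intro ballI impI)
    fix a b assume a: "a \<in> ZX X" and b: "b \<in> ZX X" and eq: "s a = s b"
    have cl: "\<exists>y\<in>\<zeta>. s y = s c \<and> (c \<in> \<zeta> - X \<and> y = c \<or> (\<exists>x\<in>X. c = ms x \<and> y = x))" if c: "c \<in> ZX X" for c
    proof (cases "c \<in> \<zeta> - X")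
      case True then show ?thesis by blast
    next
      case False
      then obtain x where x: "x \<in> X" "c = ms x" using c unfolding ZX_def by blast
      then have xz: "x \<in> \<zeta>" and xi: "x \<in> im_mu E \<pi> \<mu>" using X by auto
      have "s x = s c" using msprop[OF xi] x by simp
      then show ?thesis using xz x by blast
    qed
    obtain ya where ya: "ya \<in> \<zeta>" "s ya = s a" "a \<in> \<zeta> - X \<and> ya = a \<or> (\<exists>x\<in>X. a = ms x \<and> ya = x)"
      using cl[OF a] by blast
    obtain yb where yb: "yb \<in> \<zeta>" "s yb = s b" "b \<in> \<zeta> - X \<and> yb = b \<or> (\<exists>x\<in>X. b = ms x \<and> yb = x)"
      using cl[OF b] by blast
    have "ya = yb" by (rule fg.outdeg[OF fgz, rule_format, OF ya(1) yb(1)]) (use ya(2) yb(2) eq in simp)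
    then show "a = b" using ya(3) yb(3) by auto
  qed
  have dcycle_mono: "dcycle s t Z' es" if "dcycle s t Z es" "set es \<subseteq> Z'" for Z Z' es
    using that unfolding dcycle_def by auto
  have UX: "U \<subseteq> \<zeta> \<inter> im_mu E \<pi> \<mu>" using EF1 EF2 unfolding U_def by auto
  have fg1: "fg V s t (ZX E1)" by (rule Theta_fg[OF EF1(2) finV EV])
  have fg2: "fg V s t (ZX E2)" by (rule Theta_fg[OF EF2(2) finV EV])
  have nodc: "\<not> (\<exists>es. dcycle s t (ZX U) es)"
  proof
    assume "\<exists>es. dcycle s t (ZX U) es"
    then obtain es where dc: "dcycle s t (ZX U) es" by blast
    have esU: "set es \<subseteq> ZX U" using dc unfolding dcycle_def by simp
    have ua1: "uacyclic s t (ZX E1)" using ThetaD[OF EF1(2)] by simp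
    have ua2: "uacyclic s t (ZX E2)" using ThetaD[OF EF2(2)] by simp
    have "\<not> set es \<subseteq> ZX E1"
    proof
      assume "set es \<subseteq> ZX E1"
      then have "dcycle s t (ZX E1) es" by (rule dcycle_mono[OF dc])
      then show False using dcycle_ucycle ua1 unfolding uacyclic_def by blast
    qed
    then obtain a where a: "a \<in> set es" "a \<notin> ZX E1" by blast
    have "\<not> set es \<subseteq> ZX E2"
    proof
      assume "set es \<subseteq> ZX E2"
      then have "dcycle s t (ZX E2) es" by (rule dcycle_mono[OF dc])
      then show False using dcycle_ucycle ua2 unfolding uacyclic_def by blast
    qed
    then obtain b where b: "b \<in> set es" "b \<notin> ZX E2" by blast
    have aU: "a \<in> ZX U" using a esU by blast
    have bU: "b \<in> ZX U" using b esU by blast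
    have an: "a \<in> Eneg E \<pi> \<and> a \<in> ZX E2"
    proof -
      have "a \<notin> \<zeta> - U" using a(2) unfolding ZX_def U_def by blast
      then obtain x where x: "x \<in> U" "a = ms x" using aU unfolding ZX_def by blast
      then have "x \<in> E2" using a(2) unfolding ZX_def U_def by blast
      then show ?thesis using x msneg[OF UX] unfolding ZX_def by blast
    qed
    have bn: "b \<in> Eneg E \<pi> \<and> b \<in> ZX E1"
    proof -
      have "b \<notin> \<zeta> - U" using b(2) unfolding ZX_def U_def by blast
      then obtain x where x: "x \<in> U" "b = ms x" using bU unfolding ZX_def by blast
      then have "x \<in> E1" using b(2) unfolding ZX_def U_def by blast
      then show ?thesis using x msneg[OF UX] unfolding ZX_def by blast
    qed
    have abn: "a \<noteq> b" using a(2) bn by blast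
    have dcE: "dcycle s t E es" by (rule dcycle_mono[OF dc]) (use esU ZXE[OF UX] in blast)
    have c1: "card {i. i < length es \<and> es!i \<in> Eneg E \<pi>} \<le> 1" by (rule Pg_dc[OF Pg dcE])
    obtain ia where ia: "ia < length es" "es!ia = a" using a(1) by (auto simp: in_set_conv_nth)
    obtain ib where ib: "ib < length es" "es!ib = b" using b(1) by (auto simp: in_set_conv_nth)
    have "{ia, ib} \<subseteq> {i. i < length es \<and> es!i \<in> Eneg E \<pi>}" using ia ib an bn by auto
    moreover have "finite {i. i < length es \<and> es!i \<in> Eneg E \<pi>}" by simp
    ultimately have "card {ia, ib} \<le> 1" using c1 by (meson card_mono order_trans)
    moreover have "ia \<noteq> ib" using ia ib abn by auto
    ultimately show False by simp
  qed
  have fgU: "fg V s t (ZX U)"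
  proof
    show "finite V" by (rule finV)
    show "\<forall>e\<in>ZX U. s e \<in> V \<and> t e \<in> V" using ZXE[OF UX] EV by blast
    show "\<forall>e\<in>ZX U. s e \<noteq> t e" using ZXE[OF UX] EV by blast
    show "\<forall>e1\<in>ZX U. \<forall>e2\<in>ZX U. s e1 = s e2 \<longrightarrow> e1 = e2" by (rule outX[OF UX])
    show "\<not> (\<exists>es. dcycle s t (ZX U) es)" by (rule nodc)
  qed
  have tz: "{v\<in>V. sinkf s \<zeta> v} = B \<and> (\<forall>r\<in>B. \<exists>f\<in>F. rootf s t \<zeta> f = r)"
    by (rule iffD1[OF fg.Theta_iff[OF fgz, OF zE FV finB] zT])
  have t1: "{v\<in>V. sinkf s (ZX E1) v} = B \<and> (\<forall>r\<in>B. \<exists>f\<in>F. rootf s t (ZX E1) f = r)"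
    by (rule iffD1[OF fg.Theta_iff[OF fg1, OF ZXE[OF EF1(1)] FV finB] EF1(2)])
  have t2: "{v\<in>V. sinkf s (ZX E2) v} = B \<and> (\<forall>r\<in>B. \<exists>f\<in>F. rootf s t (ZX E2) f = r)"
    by (rule iffD1[OF fg.Theta_iff[OF fg2, OF ZXE[OF EF2(1)] FV finB] EF2(2)])
  have starI: "\<forall>l'\<in>{1..m}. \<forall>es. dpath s t E (jj i) l' es \<and> (\<exists>e\<in>set es. e \<in> Eneg E \<pi>) \<longrightarrow> m+1 \<in> set (jj i # map t es)"
    if i: "i \<in> {1..d}" for i
  proof (intro ballI allI impI)
    fix l' es assume l': "l' \<in> {1..m}" and h: "dpath s t E (jj i) l' es \<and> (\<exists>e\<in>set es. e \<in> Eneg E \<pi>)"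
    show "m+1 \<in> set (jj i # map t es)" by (rule star[rule_format, OF l' i h])
  qed
  have avoid: "\<forall>n < hf s t \<zeta> (jj i). oef s \<zeta> ((gf s t \<zeta> ^^ n) (jj i)) \<notin> X"
    if i: "i \<in> {1..d}" and X: "X \<in> {E1, E2}" for i X
  proof -
    have XX: "X \<subseteq> \<zeta> \<inter> im_mu E \<pi> \<mu>" using X EF1 EF2 by auto
    have fgX: "fg V s t (ZX X)" using X fg1 fg2 by auto
    have surX: "\<forall>r\<in>B. \<exists>f\<in>F. rootf s t (ZX X) f = r" using X t1 t2 by auto
    show ?thesis
    proof (rule jj_avoid[OF fgz fgX _ msneg[OF XX] disjX[OF XX] ZXE[OF XX] snkX[OF XX]])
      show "ZX X = \<zeta> - X \<union> ms ` X" by (simp add: ZX_def)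
      show "V = {1..m + 1}" by (simp add: V_def)
      show "jj i \<in> V" "jj i \<noteq> m + 1" using jjV[OF i] by auto
      show "rootf s t (ZX X) (jj i) \<noteq> rootf s t (ZX X) (m + 1)" by (rule sep_roots[OF surX FF cardB i])
      show "\<forall>l'\<in>{1..m}. \<forall>es. dpath s t E (jj i) l' es \<and> (\<exists>e\<in>set es. e \<in> Eneg E \<pi>) \<longrightarrow> m + 1 \<in> set (jj i # map t es)"
        by (rule starI[OF i])
    qed
  qed
  have snkU: "\<forall>v. sinkf s (ZX U) v = sinkf s \<zeta> v" using snkX[OF UX] by simp
  have keyj: "rootf s t (ZX U) (jj i) = rootf s t \<zeta> (jj i)" if i: "i \<in> {1..d}" for i
  proof -
    have "\<forall>n < hf s t \<zeta> (jj i). oef s \<zeta> ((gf s t \<zeta> ^^ n) (jj i)) \<in> ZX U"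
    proof (intro allI impI)
      fix n assume n: "n < hf s t \<zeta> (jj i)"
      have "oef s \<zeta> ((gf s t \<zeta> ^^ n) (jj i)) \<in> \<zeta>" using fg.path_step[OF fgz, OF n] by simp
      moreover have "oef s \<zeta> ((gf s t \<zeta> ^^ n) (jj i)) \<notin> E1" using avoid[OF i, of E1] n by simp
      moreover have "oef s \<zeta> ((gf s t \<zeta> ^^ n) (jj i)) \<notin> E2" using avoid[OF i, of E2] n by simp
      ultimately show "oef s \<zeta> ((gf s t \<zeta> ^^ n) (jj i)) \<in> ZX U" unfolding ZX_def U_def by blast
    qed
    then show ?thesis using fg_agree[OF fgz fgU snkU] jjV[OF i] by blast
  qed
  have mV: "m + 1 \<in> V" unfolding V_def by simp
  have rootB: "rootf s t Z (m+1) \<in> B" if "fg V s t Z" "{v\<in>V. sinkf s Z v} = B" for Z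
  proof -
    show ?thesis using fg.root_sink[OF that(1), OF mV] fg.root_V[OF that(1), OF mV] that(2) by blast
  qed
  have sinkU: "{v\<in>V. sinkf s (ZX U) v} = B" using tz snkU by simp
  have keym: "rootf s t (ZX U) (m+1) = rootf s t \<zeta> (m+1)"
  proof (cases "k = d+1")
    case False
    then have "d+1 \<in> {1..d+1} - {k}" by simp
    then have "w (d+1) \<in> Bt" and "w (d+1) \<in> Nblk mm d (d+1)" using Btw w by auto
    then have "m+1 \<in> B" using Nblk_dp1[of mm d] unfolding B_def m_def by simp
    then have "sinkf s \<zeta> (m+1)" using tz by auto
    then show ?thesis using fg.root_sink0[OF fgz] fg.root_sink0[OF fgU] snkU by simp
  next
    case True
    then have Btd: "Bt = w ` {1..d}" using Btw by auto
    have cl: "\<forall>e\<in>E. s e \<in> Nblk mm d 0 \<longrightarrow> t e \<in> Nblk mm d 0"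
    proof (intro ballI impI)
      fix e assume e: "e \<in> E" and se: "s e \<in> Nblk mm d 0"
      have "t e \<in> {1..msum mm d + 1}" using EV e unfolding V_def m_def by auto
      then have dsj: "t e \<in> Nblk mm d 0 \<or> (\<exists>j\<in>{1..d}. t e \<in> Nblk mm d j)" by (rule Nblk_cover)
      have comp1: "\<forall>e\<in>E. \<forall>i\<in>{0..d}. \<forall>j\<in>{1..d}. i \<noteq> j \<longrightarrow> \<not> (s e \<in> Nblk mm d i \<and> t e \<in> Nblk mm d j)"
        using compat unfolding A_compatible_def by (elim conjE)
      have nb: "\<not> (s e \<in> Nblk mm d 0 \<and> t e \<in> Nblk mm d j)" if j: "j \<in> {1..d}" for j
      proof -
        have "(0::nat) \<in> {0..d}" by simp
        moreover have "(0::nat) \<noteq> j" using j by simp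
        ultimately show ?thesis using comp1[rule_format, OF e _ j] by blast
      qed
      show "t e \<in> Nblk mm d 0" using dsj nb se by blast
    qed
    have m0: "m + 1 \<in> Nblk mm d 0" using Nblk0[of mm d] S1m unfolding m_def by simp
    have r0: "rootf s t \<zeta> (m+1) \<in> Nblk mm d 0" by (rule blk0_root[OF fgz zE cl mV m0])
    have rU: "rootf s t (ZX U) (m+1) \<in> Nblk mm d 0" by (rule blk0_root[OF fgU ZXE[OF UX] cl mV m0])
    have BN: "r = lB" if "r \<in> B" "r \<in> Nblk mm d 0" for r
    proof (rule ccontr)
      assume "r \<noteq> lB"
      then have "r \<in> Bt" using that(1) unfolding B_def by simp
      then obtain j where j: "j \<in> {1..d}" "r = w j" using Btd by auto
      have "w j \<in> Nblk mm d j" using w j True by auto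
      then show False using Nblk_disj0[OF j(1), of mm] that(2) j by auto
    qed
    have "rootf s t \<zeta> (m+1) = lB" using BN[OF rootB[OF fgz conjunct1[OF tz]] r0] .
    moreover have "rootf s t (ZX U) (m+1) = lB" using BN[OF rootB[OF fgU sinkU] rU] .
    ultimately show ?thesis by simp
  qed
  have "ZX U \<in> Theta V E s t F B"
  proof (subst fg.Theta_iff[OF fgU, OF ZXE[OF UX] FV finB], intro conjI ballI)
    show "{v\<in>V. sinkf s (ZX U) v} = B" by (rule sinkU)
  next
    fix r assume "r \<in> B"
    then obtain f where f: "f \<in> F" "rootf s t \<zeta> f = r" using tz by blast
    have "rootf s t (ZX U) f = rootf s t \<zeta> f" using f(1) keyj keym unfolding FF by auto
    then show "\<exists>f\<in>F. rootf s t (ZX U) f = r" using f by auto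
  qed
  then have "(\<zeta> - (E1 \<union> E2)) \<union> mu_star E \<pi> \<mu> ` (E1 \<union> E2) \<in> Theta {1..m+1} E s t F (Bt \<union> {lB})"
    unfolding ZX_def ms_def V_def B_def U_def .
  moreover have "E1 \<union> E2 \<subseteq> \<zeta> \<inter> im_mu E \<pi> \<mu>" using UX unfolding U_def .
  ultimately show ?thesis unfolding EF_def by (intro CollectI conjI)
qed


theorem lemma5p3:
  fixes mm :: "nat \<Rightarrow> nat" and d :: nat
    and A :: "nat \<Rightarrow> nat \<Rightarrow> 'a::ordered_comm_ring" and b :: "nat \<Rightarrow> 'a"
    and jj :: "nat \<Rightarrow> nat"
    and E :: "'e set" and s t :: "'e \<Rightarrow> nat" and \<pi> :: "'e \<Rightarrow> 'a" and \<mu> :: "'e \<Rightarrow> 'e set"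
    and k lB :: nat and Bt :: "nat set" and \<zeta> E1 E2 :: "'e set"
  defines "m \<equiv> msum mm d"
  defines "F \<equiv> Fset mm d jj"
  defines "EF \<equiv> (\<lambda>Z. {X. X \<subseteq> Z \<inter> im_mu E \<pi> \<mu> \<and>
                 (Z - X) \<union> mu_star E \<pi> \<mu> ` X \<in> Theta {1..m+1} E s t F (Bt \<union> {lB})})"
  assumes blocks: "block_structure mm d A b jj"
    and graph: "multidigraph (m + 1) E s t"
    and compat: "A_compatible mm d A b jj E s t \<pi>"
    and Pg: "P_graph E s t \<pi> \<mu>"
    and star: "\<forall>l'\<in>{1..m}. \<forall>i\<in>{1..d}. \<forall>es. dpath s t E (jj i) l' es
                 \<and> (\<exists>e\<in>set es. e \<in> Eneg E \<pi>) \<longrightarrow> m + 1 \<in> set (jj i # map t es)"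
    and k: "k \<in> {1..d+1}"
    and Bt: "Bt \<in> Bk mm d k"
    and lB_mem: "lB \<in> {1..m+1} - Bt"
    and zeta: "\<zeta> \<in> Theta {1..m+1} E s t F (Bt \<union> {lB})"
    and E1: "E1 \<in> EF \<zeta>" and E2: "E2 \<in> EF \<zeta>"
  shows "E1 \<union> E2 \<in> EF \<zeta>"
  using blocks graph compat Pg star k Bt lB_mem zeta E1 E2 unfolding m_def F_def EF_def
  by (rule lemma5p3_aux)

end
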